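(* Fix an integer $w\ge 3$ and set $f_w(x,y)=\sum_{j=0}^{w-2}x^jy^{w-2-j}$. Writing $\tilde a=a-1$, $\tilde b=b-1$ and letting all sums run over positive integers $a,b$ with $a+b=w$, the following polynomial identities in $x,y$ hold: \begin{align*} \sum \zeta_\sqcup(a,b)(x+y)^{\tilde a}(y^{\tilde b}+x^{\tilde b}) &=\sum \zeta_*(a,b)(x^{\tilde a}y^{\tilde b}+y^{\tilde a}x^{\tilde b})+\zeta(w)f_w(x,y),\\ \sum (x+y)^{\tilde a}\big(\zeta_\sqcup(a,\bar b)y^{\tilde b}+\zeta(\bar a,\bar b)x^{\tilde b}\big) &=\sum\big(\zeta_*(a,\bar b)x^{\tilde a}y^{\tilde b}+\zeta(\bar a,b)y^{\tilde a}x^{\tilde b}\big)+\zeta(\bar w)f_w(x,y),\\ \sum \zeta(\bar a,b)(x+y)^{\tilde a}(y^{\tilde b}+x^{\tilde b}) &=\sum \zeta(\bar a,\bar b)(x^{\tilde a}y^{\tilde b}+y^{\tilde a}x^{\tilde b})+\zeta(w)f_w(x,y). \end{align*} (The regularized values are polynomials in a variable $T$, and the identities hold in $\mathbb{R}[T][x,y]$.)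
   Context: Euler sums: for positive integers $s_1,\dots,s_d$ and signs $z_1,\dots,z_d\in\{\pm1\}$, $\zeta(s_1,\dots,s_d;z_1,\dots,z_d)=\sum_{n_1>\dots>n_d>0}\frac{z_1^{n_1}\cdots z_d^{n_d}}{n_1^{s_1}\cdots n_d^{s_d}}$, convergent iff $(s_1,z_1)\ne(1,1)$. A bar over an argument $s_j$ means $z_j=-1$, no bar means $z_j=1$; e.g. $\zeta(\bar a,b)=\zeta(a,b;-1,1)$, $\zeta(\bar w)=\zeta(w;-1)$. Regularized values: the truncated sum $\zeta^{(M)}(\mathbf s;\mathbf z)=\sum_{M\ge n_1>\dots>n_d>0}\frac{z_1^{n_1}\cdots z_d^{n_d}}{n_1^{s_1}\cdots n_d^{s_d}}$ has, as $M\to\infty$, an expansion $P(\log M+\gamma)+o(1)$ with $P$ a polynomial ($\gamma$ Euler's constant); the stuffle-regularized value is $\zeta_*(\mathbf s;\mathbf z)=P(T)\in\mathbb{R}[T]$. With $a_k=\prod_{j\le k}z_j$, the iterated integral $I^{(\varepsilon)}(\mathbf s;\mathbf z)=\int_0^{1-\varepsilon}\left(\frac{dt}{t}\right)^{s_1-1}\frac{dt}{a_1-t}\cdots\left(\frac{dt}{t}\right)^{s_d-1}\frac{dt}{a_d-t}$ (iterated integral over $1-\varepsilon>t_1>t_2>\dots>0$, forms read left to right) has, as $\varepsilon\to0^+$, an expansion $Q(-\log\varepsilon)+o(1)$ with $Q$ a polynomial; the shuffle-regularized value is $\zeta_\sqcup(\mathbf s;\mathbf z)=Q(T)$. For convergent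 (admissible) indices both regularized values equal the Euler sum, and $\zeta_\sqcup(s)=\zeta_*(s)$ in depth one. *)

theory Defs
  imports "HOL-Analysis.Analysis" "HOL-Computational_Algebra.Polynomial"
begin

text \<open>An index of an Euler sum is a list of pairs (s_j, z_j) with s_j a positive
integer and z_j = 1 or z_j = -1 (a bar means z_j = -1).\<close>

type_synonym eindex = "(nat \<times> real) list"

fun esum_trunc :: "eindex \<Rightarrow> nat \<Rightarrow> real" where
  "esum_trunc [] M = 1"
| "esum_trunc ((s, z) # r) M =
     (\<Sum>n = 1..M. z ^ n / real n ^ s * esum_trunc r (n - 1))"

definition euler_sum :: "eindex \<Rightarrow> real" where
  "euler_sum idx = lim (\<lambda>M. esum_trunc idx M)"

definition zeta_stuffle :: "eindex \<Rightarrow> real poly" where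
  "zeta_stuffle idx = (THE P. (\<lambda>M. esum_trunc idx M
       - poly P (ln (real M) + euler_mascheroni)) \<longlonglongrightarrow> 0)"

text \<open>Iterated integral of a list of one-forms (given by their densities),
  read left to right: integral over u > t_1 > t_2 > ... > 0.\<close>
fun iter_int :: "(real \<Rightarrow> real) list \<Rightarrow> real \<Rightarrow> real" where
  "iter_int [] u = 1"
| "iter_int (\<omega> # ws) u = integral {0..u} (\<lambda>t. \<omega> t * iter_int ws t)"

text \<open>The word of forms (dt/t)^(s_1-1) dt/(a_1-t) ... (dt/t)^(s_d-1) dt/(a_d-t),
  with a_k = z_1 ... z_k (first argument is the running product).\<close>
fun eforms :: "real \<Rightarrow> eindex \<Rightarrow> (real \<Rightarrow> real) list" where
  "eforms a [] = []"
| "eforms a ((s, z) # r) =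
     replicate (s - 1) (\<lambda>t. 1 / t) @ [(\<lambda>t. 1 / (a * z - t))] @ eforms (a * z) r"

definition iter_int_eps :: "eindex \<Rightarrow> real \<Rightarrow> real" where
  "iter_int_eps idx \<epsilon> = iter_int (eforms 1 idx) (1 - \<epsilon>)"

definition zeta_shuffle :: "eindex \<Rightarrow> real poly" where
  "zeta_shuffle idx = (THE Q. ((\<lambda>\<epsilon>. iter_int_eps idx \<epsilon> - poly Q (- ln \<epsilon>))
       \<longlongrightarrow> 0) (at_right 0))"

definition f_w :: "nat \<Rightarrow> real \<Rightarrow> real \<Rightarrow> real" where
  "f_w w x y = (\<Sum>j = 0..w - 2. x ^ j * y ^ (w - 2 - j))"

end

theory Submission
  imports Defs "HOL-Real_Asymp.Real_Asymp"
begin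

definition sg :: "real \<Rightarrow> bool" where "sg z \<longleftrightarrow> z = 1 \<or> z = -1"

lemma sg_cases: "sg z \<Longrightarrow> (z = 1 \<Longrightarrow> P) \<Longrightarrow> (z = -1 \<Longrightarrow> P) \<Longrightarrow> P"
  unfolding sg_def by blast

lemma sg_abs_pow: "sg z \<Longrightarrow> \<bar>z ^ n\<bar> = 1"
  by (auto simp: sg_def)

lemma sg_sq: "sg z \<Longrightarrow> z * z = 1"
  by (auto simp: sg_def)

lemma sg_pow_sq: "sg z \<Longrightarrow> z ^ n * z ^ n = 1"
  by (auto simp: sg_def simp flip: power_add mult_2)

lemma sg_mult: "sg z1 \<Longrightarrow> sg z2 \<Longrightarrow> sg (z1 * z2)"
  by (auto simp: sg_def)

definition S :: "nat \<Rightarrow> real \<Rightarrow> nat \<Rightarrow> real" where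
  "S b z k = esum_trunc [(b, z)] k"

lemma S_eq: "S b z k = (\<Sum>n=1..k. z^n / real n ^ b)" by (simp add: S_def)

lemma S_Suc: "S b z (Suc k) = S b z k + z ^ Suc k / real (Suc k) ^ b"
  by (simp add: S_eq)

lemma S_0 [simp]: "S b z 0 = 0" by (simp add: S_eq)

lemma S_diff: "k \<le> K \<Longrightarrow> S b z K - S b z k = (\<Sum>n=Suc k..K. z^n / real n ^ b)"
proof (induction K rule: dec_induct)
  case base then show ?case by simp
next
  case (step n)
  then show ?case by (simp add: S_Suc sum.cl_ivl_Suc atLeastAtMostSuc_conv algebra_simps)
qed

lemma inv_pow_le: "b \<ge> 1 \<Longrightarrow> n \<ge> 1 \<Longrightarrow> 1 / real n ^ b \<le> 1 / real n"
proof -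
  assume "b \<ge> 1" "n \<ge> 1"
  then have "real n \<le> real n ^ b" 
    by (metis One_nat_def of_nat_1 of_nat_le_iff power_increasing power_one_right real_of_nat_ge_one_iff)
  then show ?thesis using \<open>n \<ge> 1\<close> by (intro divide_left_mono) auto
qed

lemma inv_pow_le2: "b \<ge> 2 \<Longrightarrow> n \<ge> 1 \<Longrightarrow> 1 / real n ^ b \<le> 1 / real n ^ 2"
proof -
  assume "b \<ge> 2" "n \<ge> 1"
  then have "real n ^ 2 \<le> real n ^ b" by (intro power_increasing) auto
  then show ?thesis using \<open>n \<ge> 1\<close> by (intro divide_left_mono) auto
qed

lemma inv_sq_tele:
  fixes m :: real assumes "m \<ge> 1"
  shows "1 / m ^ 2 \<le> 2 / m - 2 / (m + 1)"
proof -
  have "2 / m - 2 / (m + 1) = 2 / (m * (m + 1))" using assms by (simp add: field_simps)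
  moreover have "1 / m ^ 2 \<le> 2 / (m * (m + 1))"
    using assms by (simp add: power2_eq_square divide_simps)
  ultimately show ?thesis by simp
qed

lemma sum_inv_sq_le:
  assumes "k \<le> K"
  shows "(\<Sum>n=Suc k..K. 1 / real n ^ 2) \<le> 2 / real (Suc k) - 2 / real (Suc K)"
  using assms
proof (induction K rule: dec_induct)
  case base then show ?case by simp
next
  case (step n)
  have "(\<Sum>m=Suc k..Suc n. 1 / real m ^ 2) = (\<Sum>m=Suc k..n. 1 / real m ^ 2) + 1 / real (Suc n) ^ 2"
    using step by (simp add: sum.cl_ivl_Suc)
  also have "\<dots> \<le> 2 / real (Suc k) - 2 / real (Suc n) + 1 / real (Suc n) ^ 2" using step by simp
  also have "\<dots> \<le> 2 / real (Suc k) - 2 / real (Suc (Suc n))"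
    using inv_sq_tele[of "real (Suc n)"] by (simp add: add.commute)
  finally show ?case .
qed

lemma alt_bound:
  fixes f :: "nat \<Rightarrow> real"
  assumes "\<And>n. 0 \<le> f n" "\<And>n. f (Suc n) \<le> f n"
  shows "0 \<le> (\<Sum>j<K. (-1)^j * f (s+j)) \<and> (\<Sum>j<K. (-1)^j * f (s+j)) \<le> f s"
proof (induction K arbitrary: s)
  case 0 then show ?case using assms by simp
next
  case (Suc K)
  have e: "(\<Sum>j<Suc K. (-1)^j * f (s+j)) = f s - (\<Sum>j<K. (-1)^j * f (Suc s+j))"
    unfolding sum.lessThan_Suc_shift by (simp add: sum_negf del: sum.lessThan_Suc)
  show ?case using Suc[of "Suc s"] assms[of s] unfolding e by auto
qed

lemma alt_reindex:
  assumes "k \<le> K"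
  shows "(\<Sum>n=Suc k..K. (-1::real)^n / real n ^ b)
       = (-1)^(Suc k) * (\<Sum>j<K-k. (-1)^j * (1 / real (Suc k + j) ^ b))"
  using assms
proof (induction K rule: dec_induct)
  case base then show ?case by simp
next
  case (step n)
  have "Suc n - k = Suc (n - k)" using step by simp
  then have "(\<Sum>j<Suc n-k. (-1::real)^j * (1 / real (Suc k + j) ^ b))
     = (\<Sum>j<n-k. (-1)^j * (1 / real (Suc k + j) ^ b)) + (-1)^(n-k) * (1 / real (Suc n) ^ b)"
    using step by simp
  moreover have "(-1::real)^(Suc k) * (-1)^(n-k) = (-1)^(Suc n)"
    using step by (simp flip: power_add)
  ultimately show ?case using step
    by (simp add: sum.cl_ivl_Suc algebra_simps)
qed

lemma tail_bound:
  assumes "sg z" "b \<ge> 1" "b \<ge> 2 \<or> z = -1" "k \<le> K"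
  shows "\<bar>S b z K - S b z k\<bar> \<le> 2 / real (Suc k)"
proof -
  have d: "S b z K - S b z k = (\<Sum>n=Suc k..K. z^n / real n ^ b)" using S_diff[OF assms(4)] .
  show ?thesis
  proof (cases "z = -1")
    case True
    define f where "f = (\<lambda>j. 1 / real (Suc j) ^ b)"
    have f0: "\<And>n. 0 \<le> f n" by (simp add: f_def)
    have f1: "\<And>n. f (Suc n) \<le> f n" unfolding f_def
      by (intro divide_left_mono power_mono) auto
    have "S b z K - S b z k = (\<Sum>n=Suc k..K. (-1)^n / real n ^ b)" using d True by simp
    also have "\<dots> = (-1)^(Suc k) * (\<Sum>j<K-k. (-1)^j * f (k + j))"
      unfolding alt_reindex[OF assms(4)] f_def by simp
    finally have "S b z K - S b z k = (-1)^(Suc k) * (\<Sum>j<K-k. (-1)^j * f (k + j))" .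
    then have "\<bar>S b z K - S b z k\<bar> = \<bar>\<Sum>j<K-k. (-1)^j * f (k + j)\<bar>" by (simp add: abs_mult)
    also have "\<dots> \<le> f k" using alt_bound[where f=f and K="K-k" and s=k] f0 f1 by auto
    also have "\<dots> \<le> 1 / real (Suc k)" unfolding f_def using inv_pow_le[OF assms(2), of "Suc k"] by simp
    also have "\<dots> \<le> 2 / real (Suc k)" by (simp add: divide_right_mono)
    finally show ?thesis .
  next
    case False
    then have z: "z = 1" "b \<ge> 2" using assms sg_def by auto
    have "\<bar>S b z K - S b z k\<bar> = (\<Sum>n=Suc k..K. 1 / real n ^ b)"
      using d z by (simp add: sum_nonneg)
    also have "\<dots> \<le> (\<Sum>n=Suc k..K. 1 / real n ^ 2)"
      by (intro sum_mono inv_pow_le2 z) auto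
    also have "\<dots> \<le> 2 / real (Suc k)"
    proof -
      have "0 \<le> 2 / real (Suc K)" by simp
      then show ?thesis using sum_inv_sq_le[OF assms(4)] by linarith
    qed
    finally show ?thesis .
  qed
qed

definition Z :: "nat \<Rightarrow> real \<Rightarrow> real" where "Z b z = lim (S b z)"

lemma S_conv:
  assumes "sg z" "b \<ge> 1" "b \<ge> 2 \<or> z = -1"
  shows "S b z \<longlonglongrightarrow> Z b z"
proof -
  have "Cauchy (S b z)"
  proof (rule metric_CauchyI)
    fix e :: real assume "e > 0"
    obtain N :: nat where N: "4 / e < N" using reals_Archimedean2 by blast
    have "4 / real (Suc N) < e" using N \<open>e>0\<close> by (simp add: field_simps)
    show "\<exists>M. \<forall>m\<ge>M. \<forall>n\<ge>M. dist (S b z m) (S b z n) < e"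
    proof (intro exI allI impI)
      fix m n assume "N \<le> m" "N \<le> n"
      have "dist (S b z m) (S b z n) \<le> \<bar>S b z m - S b z N\<bar> + \<bar>S b z n - S b z N\<bar>"
        by (simp add: dist_real_def)
      also have "\<dots> \<le> 2 / real (Suc N) + 2 / real (Suc N)"
        using tail_bound[OF assms \<open>N \<le> m\<close>] tail_bound[OF assms \<open>N \<le> n\<close>] by linarith
      finally show "dist (S b z m) (S b z n) < e" using \<open>4 / real (Suc N) < e\<close> by simp
    qed
  qed
  then show ?thesis unfolding Z_def by (simp add: Cauchy_convergent_iff convergent_LIMSEQ_iff)
qed

lemma Z_tail:
  assumes "sg z" "b \<ge> 1" "b \<ge> 2 \<or> z = -1"
  shows "\<bar>Z b z - S b z k\<bar> \<le> 2 / real (Suc k)"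
proof -
  have "(\<lambda>K. \<bar>S b z K - S b z k\<bar>) \<longlonglongrightarrow> \<bar>Z b z - S b z k\<bar>"
    by (intro tendsto_intros S_conv assms)
  then show ?thesis
    by (rule LIMSEQ_le_const2) (use tail_bound[OF assms] in auto)
qed

lemma harm_le_sqrt: "harm k \<le> 2 * sqrt (real k)"
proof (induction k)
  case 0 then show ?case by (simp add: harm_def)
next
  case (Suc k)
  define s where "s = sqrt (real k)"
  define t where "t = sqrt (real (Suc k))"
  have s0: "s \<ge> 0" unfolding s_def by simp
  have t1: "t \<ge> 1" unfolding t_def by simp
  have st: "s \<le> t" unfolding s_def t_def by simp
  have tt: "t * t = real k + 1" unfolding t_def by simp
  have ss: "s * s = real k" unfolding s_def by simp
  have ts: "(t - s) * (t + s) = 1" using tt ss by (simp add: algebra_simps)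
  have "t \<le> t * t" using t1 by (simp add: mult_le_cancel_left1)
  then have h: "t + s \<le> 2 * (t * t)" using st by linarith
  have "1 = (t - s) * (t + s)" using ts by simp
  also have "\<dots> \<le> (t - s) * (2 * (t * t))" using h st by (intro mult_left_mono) auto
  finally have "1 \<le> 2 * (t - s) * (t * t)" by (simp add: algebra_simps)
  then have "1 / (t*t) \<le> 2 * (t - s)" using t1 by (simp add: field_simps)
  then have "1 / real (Suc k) \<le> 2 * t - 2 * s" using tt by (simp add: add.commute)
  moreover have "harm (Suc k) = harm k + 1 / real (Suc k)" by (simp add: harm_Suc divide_inverse)
  ultimately show ?case using Suc unfolding s_def t_def by linarith
qed

lemma S_abs_le_harm:
  assumes "sg z" "b \<ge> 1"
  shows "\<bar>S b z k\<bar> \<le> harm k"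
proof -
  have "\<bar>S b z k\<bar> \<le> (\<Sum>n=1..k. \<bar>z^n / real n ^ b\<bar>)" unfolding S_eq by (rule sum_abs)
  also have "\<dots> \<le> (\<Sum>n=1..k. 1 / real n)"
    by (intro sum_mono) (auto simp: abs_divide sg_abs_pow[OF assms(1)] intro: inv_pow_le[OF assms(2)])
  also have "\<dots> = harm k" by (simp add: harm_def divide_inverse)
  finally show ?thesis .
qed

definition tm :: "nat \<Rightarrow> real \<Rightarrow> nat \<Rightarrow> real \<Rightarrow> nat \<Rightarrow> real" where
  "tm a z1 b z2 n = z1 ^ n / real n ^ a * S b z2 (n - 1)"

definition T :: "nat \<Rightarrow> real \<Rightarrow> nat \<Rightarrow> real \<Rightarrow> nat \<Rightarrow> real" where
  "T a z1 b z2 M = esum_trunc [(a, z1), (b, z2)] M"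

lemma T_eq: "T a z1 b z2 M = (\<Sum>n=1..M. tm a z1 b z2 n)"
  by (simp add: T_def tm_def S_def)

lemma tm_0: "a \<ge> 1 \<Longrightarrow> tm a z1 b z2 0 = 0"
  by (simp add: tm_def)

lemma sum_1_to_lessThan:
  fixes f :: "nat \<Rightarrow> real"
  assumes "f 0 = 0"
  shows "(\<Sum>n=1..M. f n) = (\<Sum>n<Suc M. f n)"
  using assms by (simp add: sum.atLeast1_atMost_eq sum.lessThan_Suc_shift del: sum.lessThan_Suc)

lemma T_lessThan: "a \<ge> 1 \<Longrightarrow> T a z1 b z2 M = (\<Sum>n<Suc M. tm a z1 b z2 n)"
  unfolding T_eq by (rule sum_1_to_lessThan) (simp add: tm_0)

lemma T_conv_summable:
  assumes "a \<ge> 1" "summable (tm a z1 b z2)"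
  shows "T a z1 b z2 \<longlonglongrightarrow> suminf (tm a z1 b z2)"
proof -
  have "(\<lambda>M. \<Sum>n<M. tm a z1 b z2 n) \<longlonglongrightarrow> suminf (tm a z1 b z2)"
    using summable_LIMSEQ[OF assms(2)] .
  then have "(\<lambda>M. \<Sum>n<Suc M. tm a z1 b z2 n) \<longlonglongrightarrow> suminf (tm a z1 b z2)"
    by (rule LIMSEQ_Suc)
  moreover have "T a z1 b z2 = (\<lambda>M. \<Sum>n<Suc M. tm a z1 b z2 n)"
    by (rule ext, rule T_lessThan[OF assms(1)])
  ultimately show ?thesis by simp
qed

lemma euler_sum_T: "euler_sum [(a, z1), (b, z2)] = lim (T a z1 b z2)"
  by (simp add: euler_sum_def T_def[abs_def])

lemma euler_sum_S: "euler_sum [(b, z)] = lim (S b z)"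
  by (simp add: euler_sum_def S_def[abs_def])

lemma S_conv_euler:
  assumes "sg z" "b \<ge> 2"
  shows "S b z \<longlonglongrightarrow> euler_sum [(b, z)]"
proof -
  have "S b z \<longlonglongrightarrow> Z b z" using S_conv[OF assms(1)] assms(2) by auto
  then show ?thesis unfolding euler_sum_S by (simp add: limI)
qed

lemma tm_bound2:
  assumes "a \<ge> 2" "sg z1" "sg z2" "b \<ge> 1"
  shows "\<bar>tm a z1 b z2 n\<bar> \<le> 2 * real n powr (-3/2)"
proof (cases "n = 0")
  case True then show ?thesis using assms by (simp add: tm_0)
next
  case False
  then have n1: "real n \<ge> 1" by simp
  have "\<bar>tm a z1 b z2 n\<bar> = \<bar>S b z2 (n-1)\<bar> / real n ^ a"
    by (simp add: tm_def abs_mult abs_divide sg_abs_pow[OF assms(2)])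
  also have "\<dots> \<le> harm n / real n ^ 2"
  proof (rule frac_le)
    show "0 \<le> (harm n :: real)" by (simp add: harm_nonneg)
    have "\<bar>S b z2 (n-1)\<bar> \<le> harm (n-1)" by (rule S_abs_le_harm[OF assms(3,4)])
    also have "\<dots> \<le> (harm n :: real)" by (rule harm_mono) simp
    finally show "\<bar>S b z2 (n-1)\<bar> \<le> harm n" .
    show "0 < real n ^ 2" using n1 by simp
    show "real n ^ 2 \<le> real n ^ a" using n1 assms(1) by (intro power_increasing) auto
  qed
  also have "\<dots> \<le> 2 * sqrt (real n) / real n ^ 2"
    by (intro divide_right_mono harm_le_sqrt) simp
  also have "\<dots> = 2 * real n powr (-3/2)"
  proof -
    have a1: "sqrt (real n) = real n powr (1/2)" using n1 by (simp add: powr_half_sqrt)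
    have a2: "real n ^ 2 = real n powr 2" using n1 by (simp add: powr_realpow)
    have m: "(-3/2::real) = 1/2 - 2" by simp
    have a3: "real n powr (-3/2) = real n powr (1/2) / real n powr 2"
      unfolding m by (rule powr_diff)
    show ?thesis unfolding a1 a2 a3 by simp
  qed
  finally show ?thesis .
qed

lemma summable_abs_tm2:
  assumes "a \<ge> 2" "sg z1" "sg z2" "b \<ge> 1"
  shows "summable (\<lambda>n. \<bar>tm a z1 b z2 n\<bar>)"
proof (rule summable_comparison_test')
  show "summable (\<lambda>n. 2 * real n powr (-3/2))"
    by (intro summable_mult) (simp add: summable_real_powr_iff)
  show "\<And>n. 0 \<le> n \<Longrightarrow> norm \<bar>tm a z1 b z2 n\<bar> \<le> 2 * real n powr (-3/2)"
    using tm_bound2[OF assms] by simp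
qed

lemma summable_inv_sq: "summable (\<lambda>n. 2 / real n ^ 2)"
proof -
  have "summable (\<lambda>n. 2 * inverse (real n ^ 2))"
    by (intro summable_mult inverse_power_summable) auto
  then show ?thesis by (simp add: divide_inverse)
qed

definition rr :: "nat \<Rightarrow> real \<Rightarrow> nat \<Rightarrow> real" where
  "rr b z n = (Z b z - S b z (n - 1)) / real n"

lemma rr_bound:
  assumes "sg z" "b \<ge> 1" "b \<ge> 2 \<or> z = -1"
  shows "\<bar>rr b z n\<bar> \<le> 2 / real n ^ 2"
proof (cases "n = 0")
  case True then show ?thesis by (simp add: rr_def)
next
  case False
  have "\<bar>rr b z n\<bar> = \<bar>Z b z - S b z (n - 1)\<bar> / real n" by (simp add: rr_def abs_divide)
  also have "\<dots> \<le> (2 / real n) / real n"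
    using Z_tail[OF assms, of "n-1"] False by (intro divide_right_mono) auto
  also have "\<dots> = 2 / real n ^ 2" by (simp add: power2_eq_square)
  finally show ?thesis .
qed

lemma summable_abs_rr:
  assumes "sg z" "b \<ge> 1" "b \<ge> 2 \<or> z = -1"
  shows "summable (\<lambda>n. \<bar>rr b z n\<bar>)"
  by (rule summable_comparison_test'[OF summable_inv_sq, of 0]) (use rr_bound[OF assms] in auto)

lemma summable_alt_harm: "summable (\<lambda>n. (-1::real)^n / real n)"
proof -
  have "summable (\<lambda>n. (-1::real)^n * (1 / real (Suc n)))"
  proof (rule summable_Leibniz'(1))
    show "(\<lambda>n. 1 / real (Suc n)) \<longlonglongrightarrow> 0"
      using LIMSEQ_inverse_real_of_nat by (simp add: inverse_eq_divide)
    show "\<And>n. 0 \<le> 1 / real (Suc n)" by simp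
    show "\<And>n. 1 / real (Suc (Suc n)) \<le> 1 / real (Suc n)" by (simp add: frac_le)
  qed
  then have "summable (\<lambda>n. - ((-1::real)^n * (1 / real (Suc n))))" by (rule summable_minus)
  then have "summable (\<lambda>n. (-1::real)^(Suc n) / real (Suc n))" by simp
  then show ?thesis by (subst (asm) summable_Suc_iff)
qed

lemma tm_alt1:
  "tm 1 (-1) b z n = Z b z * ((-1)^n / real n) - (-1)^n * rr b z n"
  by (cases "n = 0") (simp_all add: tm_def rr_def field_simps)

lemma summable_tm_alt1:
  assumes "sg z" "b \<ge> 1" "b \<ge> 2 \<or> z = -1"
  shows "summable (tm 1 (-1) b z)"
proof -
  have "summable (\<lambda>n. Z b z * ((-1)^n / real n))"
    by (intro summable_mult summable_alt_harm)
  moreover have "summable (\<lambda>n. (-1)^n * rr b z n)"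
    by (rule summable_comparison_test'[OF summable_abs_rr[OF assms], of 0]) (simp add: abs_mult)
  ultimately have "summable (\<lambda>n. Z b z * ((-1)^n / real n) - (-1)^n * rr b z n)"
    by (rule summable_diff)
  then show ?thesis unfolding tm_alt1[abs_def] .
qed

lemma T_conv_euler:
  assumes "a \<ge> 1" "b \<ge> 1" "sg z1" "sg z2"
    "a \<ge> 2 \<or> (a = 1 \<and> z1 = -1 \<and> (b \<ge> 2 \<or> z2 = -1))"
  shows "T a z1 b z2 \<longlonglongrightarrow> euler_sum [(a, z1), (b, z2)]"
proof -
  have sm: "summable (tm a z1 b z2)"
  proof (cases "a \<ge> 2")
    case True
    then show ?thesis using summable_abs_tm2[OF True assms(3,4,2)] summable_rabs_cancel by blast
  next
    case False
    then have "a = 1" "z1 = -1" "b \<ge> 2 \<or> z2 = -1" using assms(5) by auto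
    then show ?thesis using summable_tm_alt1[OF assms(4,2)] by simp
  qed
  have "T a z1 b z2 \<longlonglongrightarrow> suminf (tm a z1 b z2)" by (rule T_conv_summable[OF assms(1) sm])
  moreover then have "euler_sum [(a, z1), (b, z2)] = suminf (tm a z1 b z2)"
    unfolding euler_sum_T by (simp add: limI)
  ultimately show ?thesis by simp
qed

lemma poly_tendsto_zero:
  fixes p :: "real poly"
  assumes f: "filterlim f at_top F" and F: "F \<noteq> bot"
  shows "((\<lambda>t. poly p (f t)) \<longlongrightarrow> 0) F \<Longrightarrow> p = 0"
proof (induction p rule: pCons_induct)
  case 0 show ?case by simp
next
  case (pCons c q)
  have h: "((\<lambda>t. c + f t * poly q (f t)) \<longlongrightarrow> 0) F" using pCons.prems by simp
  have "((\<lambda>t. (c + f t * poly q (f t)) - c) \<longlongrightarrow> 0 - c) F"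
    by (intro tendsto_diff h tendsto_const)
  then have h2: "((\<lambda>t. f t * poly q (f t)) \<longlongrightarrow> - c) F" by simp
  have lim: "((\<lambda>t. (f t * poly q (f t)) * inverse (f t)) \<longlongrightarrow> - c * 0) F"
    by (intro tendsto_mult h2 tendsto_inverse_0_at_top f)
  have "eventually (\<lambda>t. f t > 0) F" using f by (simp add: filterlim_at_top_dense)
  then have ev: "eventually (\<lambda>t. (f t * poly q (f t)) * inverse (f t) = poly q (f t)) F"
    by eventually_elim simp
  have "((\<lambda>t. poly q (f t)) \<longlongrightarrow> - c * 0) F"
    using tendsto_cong[OF ev] lim by simp
  then have "((\<lambda>t. poly q (f t)) \<longlongrightarrow> 0) F" by simp
  then have q: "q = 0" by (rule pCons.IH)
  then have "((\<lambda>t. c) \<longlongrightarrow> 0) F" using h by simp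
  then have "c = 0" using F tendsto_const tendsto_unique by blast
  then show ?case using q by simp
qed

lemma tM_at_top: "filterlim (\<lambda>M. ln (real M) + euler_mascheroni) at_top sequentially"
proof -
  have "filterlim (\<lambda>M. euler_mascheroni + ln (real M)) at_top sequentially"
    by (rule filterlim_tendsto_add_at_top[OF tendsto_const filterlim_compose[OF ln_at_top filterlim_real_sequentially]])
  then show ?thesis by (simp add: add.commute)
qed

lemma neg_ln_at_top: "filterlim (\<lambda>e. - ln (e::real)) at_top (at_right 0)"
  using ln_at_0 by (simp add: filterlim_uminus_at_top)

lemma zeta_stuffle_eq:
  assumes "(\<lambda>M. esum_trunc idx M - poly P (ln (real M) + euler_mascheroni)) \<longlonglongrightarrow> 0"
  shows "zeta_stuffle idx = P"
  unfolding zeta_stuffle_def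
proof (rule the_equality)
  show "(\<lambda>M. esum_trunc idx M - poly P (ln (real M) + euler_mascheroni)) \<longlonglongrightarrow> 0" by fact
  fix Q assume Q: "(\<lambda>M. esum_trunc idx M - poly Q (ln (real M) + euler_mascheroni)) \<longlonglongrightarrow> 0"
  have "(\<lambda>M. (esum_trunc idx M - poly P (ln (real M) + euler_mascheroni))
       - (esum_trunc idx M - poly Q (ln (real M) + euler_mascheroni))) \<longlonglongrightarrow> 0 - 0"
    by (intro tendsto_diff assms Q)
  then have "(\<lambda>M. poly (Q - P) (ln (real M) + euler_mascheroni)) \<longlonglongrightarrow> 0" by simp
  then have "Q - P = 0" by (rule poly_tendsto_zero[OF tM_at_top, rotated]) simp
  then show "Q = P" by simp
qed

lemma zeta_shuffle_eq:
  assumes "((\<lambda>e. iter_int_eps idx e - poly P (- ln e)) \<longlongrightarrow> 0) (at_right 0)"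
  shows "zeta_shuffle idx = P"
  unfolding zeta_shuffle_def
proof (rule the_equality)
  show "((\<lambda>e. iter_int_eps idx e - poly P (- ln e)) \<longlongrightarrow> 0) (at_right 0)" by fact
  fix Q assume Q: "((\<lambda>e. iter_int_eps idx e - poly Q (- ln e)) \<longlongrightarrow> 0) (at_right 0)"
  have "((\<lambda>e. (iter_int_eps idx e - poly P (- ln e)) - (iter_int_eps idx e - poly Q (- ln e)))
     \<longlongrightarrow> 0 - 0) (at_right 0)"
    by (intro tendsto_diff assms Q)
  then have "((\<lambda>e. poly (Q - P) (- ln e)) \<longlongrightarrow> 0) (at_right (0::real))" by simp
  then have "Q - P = 0" by (rule poly_tendsto_zero[OF neg_ln_at_top, rotated]) simp
  then show "Q = P" by simp
qed

lemma rr_0: "rr b z 0 = 0" by (simp add: rr_def)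

lemma T11_eq: "T 1 1 b z M = Z b z * harm M - (\<Sum>n=1..M. rr b z n)"
proof -
  have "T 1 1 b z M = (\<Sum>n=1..M. Z b z * inverse (real n) - rr b z n)"
    unfolding T_eq by (intro sum.cong) (auto simp: tm_def rr_def field_simps)
  also have "\<dots> = Z b z * harm M - (\<Sum>n=1..M. rr b z n)"
    by (simp add: sum_subtractf sum_distrib_left harm_def)
  finally show ?thesis .
qed

lemma stuffle_1:
  assumes "sg z" "b \<ge> 1" "b \<ge> 2 \<or> z = -1"
  shows "(\<lambda>M. T 1 1 b z M - poly [: - suminf (rr b z), Z b z :] (ln (real M) + euler_mascheroni))
          \<longlonglongrightarrow> 0"
proof -
  have sm: "summable (rr b z)" using summable_abs_rr[OF assms] summable_rabs_cancel by blast
  have "(\<lambda>M. \<Sum>n<Suc M. rr b z n) \<longlonglongrightarrow> suminf (rr b z)"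
    using LIMSEQ_Suc[OF summable_LIMSEQ[OF sm]] .
  moreover have "\<And>M. (\<Sum>n=1..M. rr b z n) = (\<Sum>n<Suc M. rr b z n)"
    by (rule sum_1_to_lessThan) (simp add: rr_0)
  ultimately have r: "(\<lambda>M. \<Sum>n=1..M. rr b z n) \<longlonglongrightarrow> suminf (rr b z)" by simp
  have "(\<lambda>M. Z b z * ((harm M - ln (real M)) - euler_mascheroni)
          - ((\<Sum>n=1..M. rr b z n) - suminf (rr b z))) \<longlonglongrightarrow> Z b z * (euler_mascheroni - euler_mascheroni) - (suminf (rr b z) - suminf (rr b z))"
    by (intro tendsto_intros euler_mascheroni_LIMSEQ r)
  then show ?thesis unfolding T11_eq by (simp add: algebra_simps)
qed

definition rep :: "(real \<Rightarrow> real) list \<Rightarrow> (nat \<Rightarrow> real) \<Rightarrow> bool" where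
  "rep ws c \<longleftrightarrow> (\<forall>u. 0 \<le> u \<and> u < 1 \<longrightarrow> iter_int ws u = (\<Sum>n. c n * u ^ n)) \<and> (\<forall>n. \<bar>c n\<bar> \<le> 1)"

lemma summable_bdd_powser:
  fixes d :: "nat \<Rightarrow> real"
  assumes "\<And>n. \<bar>d n\<bar> \<le> 1" "\<bar>K\<bar> < 1"
  shows "summable (\<lambda>n. d n * K ^ n)"
proof (rule summable_comparison_test'[of "\<lambda>n. \<bar>K\<bar> ^ n" 0])
  show "summable (\<lambda>n. \<bar>K\<bar> ^ n)" using assms(2) by (intro summable_geometric) simp
  fix n :: nat
  have "\<bar>d n\<bar> * \<bar>K\<bar> ^ n \<le> 1 * \<bar>K\<bar> ^ n" by (intro mult_right_mono assms(1)) simp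
  then show "norm (d n * K ^ n) \<le> \<bar>K\<bar> ^ n" by (simp add: abs_mult power_abs)
qed

lemma summable_bdd_powser_abs:
  fixes d :: "nat \<Rightarrow> real"
  assumes "\<And>n. \<bar>d n\<bar> \<le> 1" "\<bar>K\<bar> < 1"
  shows "summable (\<lambda>n. norm (d n * K ^ n))"
proof (rule summable_comparison_test'[of "\<lambda>n. \<bar>K\<bar> ^ n" 0])
  show "summable (\<lambda>n. \<bar>K\<bar> ^ n)" using assms(2) by (intro summable_geometric) simp
  fix n :: nat
  have "\<bar>d n\<bar> * \<bar>K\<bar> ^ n \<le> 1 * \<bar>K\<bar> ^ n" by (intro mult_right_mono assms(1)) simp
  then show "norm (norm (d n * K ^ n)) \<le> \<bar>K\<bar> ^ n" by (simp add: abs_mult power_abs)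
qed

lemma powser_deriv:
  fixes d :: "nat \<Rightarrow> real"
  assumes "\<And>n. \<bar>d n\<bar> \<le> 1" "\<bar>x\<bar> < 1"
  shows "DERIV (\<lambda>x. \<Sum>n. d n * x ^ n) x :> (\<Sum>n. diffs d n * x ^ n)"
proof (rule termdiffs_strong)
  show "summable (\<lambda>n. d n * ((1 + \<bar>x\<bar>) / 2) ^ n)"
    using assms by (intro summable_bdd_powser) auto
  show "norm x < norm ((1 + \<bar>x\<bar>) / 2)" using assms by auto
qed

lemma ftc_step:
  assumes r: "rep ws c" and d1: "\<And>n. \<bar>d n\<bar> \<le> 1" and d0: "d 0 = 0"
    and der: "\<And>x. 0 < x \<Longrightarrow> x < 1 \<Longrightarrow> (\<Sum>n. diffs d n * x ^ n) = \<omega> x * (\<Sum>n. c n * x ^ n)"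
  shows "rep (\<omega> # ws) d"
  unfolding rep_def
proof (intro conjI allI impI)
  show "\<bar>d n\<bar> \<le> 1" for n by (rule d1)
  fix u :: real assume u: "0 \<le> u \<and> u < 1"
  define F where "F = (\<lambda>x::real. \<Sum>n. d n * x ^ n)"
  have D: "DERIV F x :> (\<Sum>n. diffs d n * x ^ n)" if "\<bar>x\<bar> < 1" for x
    unfolding F_def by (rule powser_deriv[OF d1 that])
  have cont: "continuous_on {0..u} F"
    by (rule continuous_at_imp_continuous_on) (use u in \<open>auto intro!: DERIV_isCont D\<close>)
  have "((\<lambda>t. \<omega> t * iter_int ws t) has_integral (F u - F 0)) {0..u}"
  proof (rule fundamental_theorem_of_calculus_interior)
    show "0 \<le> u" using u by simp
    show "continuous_on {0..u} F" by (rule cont)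
    fix x assume x: "x \<in> {0<..<u}"
    then have x1: "0 < x" "x < 1" using u by auto
    have "iter_int ws x = (\<Sum>n. c n * x ^ n)" using r x1 unfolding rep_def by auto
    then have "(\<Sum>n. diffs d n * x ^ n) = \<omega> x * iter_int ws x" using der[OF x1] by simp
    then have "DERIV F x :> \<omega> x * iter_int ws x" using D[of x] x1 by simp
    then show "(F has_vector_derivative \<omega> x * iter_int ws x) (at x)"
      by (simp add: has_real_derivative_iff_has_vector_derivative)
  qed
  moreover have "F 0 = 0" unfolding F_def using d0 by simp
  ultimately have "integral {0..u} (\<lambda>t. \<omega> t * iter_int ws t) = F u"
    by (simp add: integral_unique)
  then show "iter_int (\<omega> # ws) u = (\<Sum>n. d n * u ^ n)" by (simp add: F_def)
qed

lemma rep_nil: "rep [] (\<lambda>n. if n = 0 then 1 else 0)"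
  unfolding rep_def
proof (intro conjI allI impI)
  fix u :: real
  have "(\<lambda>n. (if n = 0 then 1 else 0) * u ^ n) = (\<lambda>n. if n = 0 then (\<lambda>_. 1::real) n else 0)"
    by auto
  moreover have "(\<lambda>n. if n = 0 then (\<lambda>_. 1::real) n else 0) sums 1"
    using sums_single[of 0 "\<lambda>_. 1::real"] by simp
  ultimately show "iter_int [] u = (\<Sum>n. (if n = 0 then 1 else 0) * u ^ n)"
    by (simp add: sums_iff)
qed auto

lemma rep_cong: "rep ws c \<Longrightarrow> (\<And>n. c n = c' n) \<Longrightarrow> rep ws c'"
proof -
  assume "rep ws c" "\<And>n. c n = c' n"
  then have "c = c'" by auto
  then show "rep ws c'" using \<open>rep ws c\<close> by simp
qed

lemma rep_inv:
  assumes r: "rep ws c" and c0: "c 0 = 0"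
  shows "rep ((\<lambda>t. 1 / t) # ws) (\<lambda>n. c n / real n)"
proof (rule ftc_step[OF r])
  show "\<bar>c n / real n\<bar> \<le> 1" for n
  proof (cases "n = 0")
    case False
    have "\<bar>c n / real n\<bar> = \<bar>c n\<bar> / real n" by (simp add: abs_divide)
    also have "\<dots> \<le> \<bar>c n\<bar>" using False by (simp add: divide_le_eq mult_le_cancel_left1 abs_ge_zero order_trans)
    also have "\<dots> \<le> 1" using r unfolding rep_def by auto
    finally show ?thesis .
  qed simp
  show "c 0 / real 0 = 0" by simp
  fix x :: real assume x: "0 < x" "x < 1"
  have c1: "\<And>n. \<bar>c n\<bar> \<le> 1" using r unfolding rep_def by auto
  have dd: "diffs (\<lambda>n. c n / real n) n = c (Suc n)" for n
    by (simp add: diffs_def)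
  have "summable (\<lambda>n. c n * x ^ n)" using x by (intro summable_bdd_powser c1) simp
  then have "(\<lambda>n. c n * x ^ n) sums (\<Sum>n. c n * x ^ n)" by (simp add: summable_sums)
  then have "(\<lambda>n. c (Suc n) * x ^ Suc n) sums (\<Sum>n. c n * x ^ n)"
    using sums_Suc_iff[of "\<lambda>n. c n * x ^ n"] c0 by simp
  then have "(\<lambda>n. (1 / x) * (c (Suc n) * x ^ Suc n)) sums ((1 / x) * (\<Sum>n. c n * x ^ n))"
    by (rule sums_mult)
  moreover have "(\<lambda>n. (1 / x) * (c (Suc n) * x ^ Suc n)) = (\<lambda>n. c (Suc n) * x ^ n)"
    using x by (auto simp: field_simps)
  ultimately have "(\<lambda>n. c (Suc n) * x ^ n) sums ((1 / x) * (\<Sum>n. c n * x ^ n))" by simp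
  then show "(\<Sum>n. diffs (\<lambda>n. c n / real n) n * x ^ n) = 1 / x * (\<Sum>n. c n * x ^ n)"
    unfolding dd by (simp add: sums_iff)
qed

lemma rep_lin:
  assumes r: "rep ws c" and z: "sg zz"
  shows "rep ((\<lambda>t. 1 / (zz - t)) # ws)
     (\<lambda>n. if n = 0 then 0 else (\<Sum>m<n. c m * zz ^ (n - m)) / real n)"
proof (rule ftc_step[OF r])
  have c1: "\<And>n. \<bar>c n\<bar> \<le> 1" using r unfolding rep_def by auto
  show "\<bar>if n = 0 then 0 else (\<Sum>m<n. c m * zz ^ (n - m)) / real n\<bar> \<le> 1" for n
  proof (cases "n = 0")
    case False
    have "\<bar>\<Sum>m<n. c m * zz ^ (n - m)\<bar> \<le> (\<Sum>m<n. \<bar>c m * zz ^ (n - m)\<bar>)" by (rule sum_abs)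
    also have "\<dots> \<le> (\<Sum>m<n. 1)"
      by (intro sum_mono) (simp add: abs_mult sg_abs_pow[OF z] c1)
    also have "\<dots> = real n" by simp
    finally have "\<bar>\<Sum>m<n. c m * zz ^ (n - m)\<bar> \<le> real n" .
    then show ?thesis using False by (simp add: abs_divide divide_le_eq)
  qed simp
  show "(if 0 = (0::nat) then 0 else (\<Sum>m<0. c m * zz ^ (0 - m)) / real 0) = 0" by simp
  fix x :: real assume x: "0 < x" "x < 1"
  have dd: "diffs (\<lambda>n. if n = 0 then 0 else (\<Sum>m<n. c m * zz ^ (n - m)) / real n) n
      = (\<Sum>m<Suc n. c m * zz ^ (Suc n - m))" for n
    by (simp add: diffs_def del: sum.lessThan_Suc)
  have sa: "summable (\<lambda>k. norm (c k * x ^ k))" using x by (intro summable_bdd_powser_abs c1) simp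
  have b1: "\<And>n. \<bar>zz ^ Suc n\<bar> \<le> 1" by (metis sg_abs_pow[OF z] order_refl)
  have sb: "summable (\<lambda>k. norm (zz ^ Suc k * x ^ k))" using x by (intro summable_bdd_powser_abs b1) simp
  have "(\<Sum>k. c k * x ^ k) * (\<Sum>k. zz ^ Suc k * x ^ k)
      = (\<Sum>k. \<Sum>i\<le>k. (c i * x ^ i) * (zz ^ Suc (k - i) * x ^ (k - i)))"
    by (rule Cauchy_product[OF sa sb])
  also have "\<dots> = (\<Sum>k. (\<Sum>m<Suc k. c m * zz ^ (Suc k - m)) * x ^ k)"
  proof (rule suminf_cong)
    fix k
    have "(\<Sum>i\<le>k. (c i * x ^ i) * (zz ^ Suc (k - i) * x ^ (k - i)))
        = (\<Sum>i\<le>k. c i * zz ^ (Suc k - i) * x ^ k)"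
    proof (rule sum.cong)
      fix i assume "i \<in> {..k}"
      then have i: "i \<le> k" by simp
      then have "x ^ i * x ^ (k - i) = x ^ k" by (simp flip: power_add)
      moreover have "Suc (k - i) = Suc k - i" using i by simp
      ultimately show "(c i * x ^ i) * (zz ^ Suc (k - i) * x ^ (k - i)) = c i * zz ^ (Suc k - i) * x ^ k"
        by (metis mult.commute mult.left_commute)
    qed simp
    also have "\<dots> = (\<Sum>m<Suc k. c m * zz ^ (Suc k - m)) * x ^ k"
      by (simp add: sum_distrib_right lessThan_Suc_atMost del: sum.lessThan_Suc)
    finally show "(\<Sum>i\<le>k. (c i * x ^ i) * (zz ^ Suc (k - i) * x ^ (k - i)))
        = (\<Sum>m<Suc k. c m * zz ^ (Suc k - m)) * x ^ k" .
  qed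
  finally have cp: "(\<Sum>k. c k * x ^ k) * (\<Sum>k. zz ^ Suc k * x ^ k)
      = (\<Sum>k. (\<Sum>m<Suc k. c m * zz ^ (Suc k - m)) * x ^ k)" .
  have "(\<Sum>k. zz ^ Suc k * x ^ k) = (\<Sum>k. zz * (zz * x) ^ k)"
    by (simp add: power_mult_distrib mult.assoc)
  also have "\<dots> = zz * (\<Sum>k. (zz * x) ^ k)"
    using x z by (intro suminf_mult summable_geometric) (auto simp: sg_def)
  also have "\<dots> = zz * (1 / (1 - zz * x))"
    using x z by (subst suminf_geometric) (auto simp: sg_def)
  also have "\<dots> = 1 / (zz - x)"
    using x z by (auto simp: sg_def field_simps)
  finally have g: "(\<Sum>k. zz ^ Suc k * x ^ k) = 1 / (zz - x)" .
  show "(\<Sum>n. diffs (\<lambda>n. if n = 0 then 0 else (\<Sum>m<n. c m * zz ^ (n - m)) / real n) n * x ^ n)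
      = 1 / (zz - x) * (\<Sum>n. c n * x ^ n)"
    unfolding dd using cp g by (simp add: mult.commute)
qed

lemma rep_rep:
  assumes r: "rep ws c" and c0: "c 0 = 0"
  shows "rep (replicate k (\<lambda>t. 1 / t) @ ws) (\<lambda>n. c n / real n ^ k)"
proof (induction k)
  case 0 then show ?case using r by simp
next
  case (Suc k)
  have h: "rep ((\<lambda>t. 1 / t) # (replicate k (\<lambda>t. 1 / t) @ ws)) (\<lambda>n. c n / real n ^ k / real n)"
    by (rule rep_inv[OF Suc]) (simp add: c0)
  have e: "replicate (Suc k) (\<lambda>t. 1 / t) @ ws = (\<lambda>t. 1 / t) # (replicate k (\<lambda>t. 1 / t) @ ws)"
    by simp
  show ?case unfolding e by (rule rep_cong[OF h]) (simp add: field_simps)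
qed

lemma sum_delta0:
  fixes g :: "nat \<Rightarrow> real"
  assumes "n > 0"
  shows "(\<Sum>m<n. (if m = 0 then 1 else 0) * g m) = g 0"
proof -
  have "(\<Sum>m<n. (if m = 0 then 1 else 0) * g m) = (\<Sum>m<n. if m = 0 then g m else 0)"
    by (intro sum.cong) auto
  also have "\<dots> = g 0" using assms by (simp add: sum.delta)
  finally show ?thesis .
qed

lemma eforms_eq:
  "eforms 1 [(a, 1), (b, z)] =
    replicate (a - 1) (\<lambda>t. 1 / t) @ (\<lambda>t. 1 / (1 - t)) # (replicate (b - 1) (\<lambda>t. 1 / t) @ [\<lambda>t. 1 / (z - t)])"
  by simp

lemma rep_eforms:
  assumes "a \<ge> 1" "b \<ge> 1" "sg z"
  shows "rep (eforms 1 [(a, 1), (b, z)]) (tm a 1 b z)"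
proof -
  have r1': "rep ((\<lambda>t. 1 / (z - t)) # [])
     (\<lambda>n. if n = 0 then 0 else (\<Sum>m<n. (if m = 0 then 1 else 0) * z ^ (n - m)) / real n)"
    by (rule rep_lin[OF rep_nil assms(3)])
  have r1: "rep [\<lambda>t. 1 / (z - t)] (\<lambda>n. z ^ n / real n)"
    by (rule rep_cong[OF r1']) (simp add: sum_delta0)
  have r2': "rep (replicate (b - 1) (\<lambda>t. 1 / t) @ [\<lambda>t. 1 / (z - t)]) (\<lambda>n. z ^ n / real n / real n ^ (b - 1))"
    by (rule rep_rep[OF r1]) simp
  have pb: "real n ^ b = real n * real n ^ (b - 1)" for n
    using assms(2) by (metis Suc_diff_le diff_Suc_1 power_Suc)
  have r2: "rep (replicate (b - 1) (\<lambda>t. 1 / t) @ [\<lambda>t. 1 / (z - t)]) (\<lambda>n. z ^ n / real n ^ b)"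
    by (rule rep_cong[OF r2']) (simp add: pb)
  have r3': "rep ((\<lambda>t. 1 / (1 - t)) # (replicate (b - 1) (\<lambda>t. 1 / t) @ [\<lambda>t. 1 / (z - t)]))
     (\<lambda>n. if n = 0 then 0 else (\<Sum>m<n. z ^ m / real m ^ b * 1 ^ (n - m)) / real n)"
    by (rule rep_lin[OF r2]) (simp add: sg_def)
  have Sn: "(\<Sum>m<n. z ^ m / real m ^ b) = S b z (n - 1)" if "n > 0" for n
  proof -
    have "S b z (n - 1) = (\<Sum>m=1..n-1. z ^ m / real m ^ b)" by (rule S_eq)
    also have "\<dots> = (\<Sum>m<Suc (n-1). z ^ m / real m ^ b)"
      by (rule sum_1_to_lessThan) (use assms(2) in simp)
    also have "Suc (n - 1) = n" using that by simp
    finally show ?thesis by simp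
  qed
  have r3: "rep ((\<lambda>t. 1 / (1 - t)) # (replicate (b - 1) (\<lambda>t. 1 / t) @ [\<lambda>t. 1 / (z - t)]))
     (\<lambda>n. S b z (n - 1) / real n)"
    by (rule rep_cong[OF r3']) (simp add: Sn)
  have r4': "rep (replicate (a - 1) (\<lambda>t. 1 / t) @ (\<lambda>t. 1 / (1 - t)) # (replicate (b - 1) (\<lambda>t. 1 / t) @ [\<lambda>t. 1 / (z - t)]))
     (\<lambda>n. S b z (n - 1) / real n / real n ^ (a - 1))"
    by (rule rep_rep[OF r3]) simp
  have pa: "real n ^ a = real n * real n ^ (a - 1)" for n
    using assms(1) by (metis Suc_diff_le diff_Suc_1 power_Suc)
  show ?thesis unfolding eforms_eq
    by (rule rep_cong[OF r4']) (simp add: pa tm_def)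
qed

lemma iter_eps_series:
  assumes "a \<ge> 1" "b \<ge> 1" "sg z" "0 < e" "e \<le> 1"
  shows "iter_int_eps [(a, 1), (b, z)] e = (\<Sum>n. tm a 1 b z n * (1 - e) ^ n)"
  using rep_eforms[OF assms(1-3)] assms(4,5) unfolding rep_def iter_int_eps_def by auto

lemma abel_abs:
  fixes c :: "nat \<Rightarrow> real"
  assumes "summable (\<lambda>n. \<bar>c n\<bar>)"
  shows "((\<lambda>e. \<Sum>n. c n * (1 - e) ^ n) \<longlongrightarrow> suminf c) (at_right 0)"
proof -
  define g where "g = (\<lambda>u::real. \<Sum>n. c n * u ^ n)"
  have ul: "uniform_limit {0..1} (\<lambda>N u. \<Sum>n<N. c n * u ^ n) g sequentially"
    unfolding g_def
  proof (rule Weierstrass_m_test[OF _ assms])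
    fix n and u :: real assume "u \<in> {0..1}"
    then have "\<bar>u ^ n\<bar> \<le> 1" by (simp add: power_le_one abs_power_minus power_abs)
    then have "\<bar>c n\<bar> * \<bar>u ^ n\<bar> \<le> \<bar>c n\<bar> * 1" by (intro mult_left_mono) auto
    then show "norm (c n * u ^ n) \<le> \<bar>c n\<bar>" by (simp add: abs_mult)
  qed
  have "\<forall>N. continuous_on {0..1} (\<lambda>u. \<Sum>n<N. c n * u ^ n)"
    by (auto intro!: continuous_intros)
  then have "continuous_on {0..1} g"
    by (intro uniform_limit_theorem[OF always_eventually ul]) auto
  then have "continuous_on {0..1} (\<lambda>e. g (1 - e))"
    by (rule continuous_on_compose2) (auto intro!: continuous_intros)
  then have "((\<lambda>e. g (1 - e)) \<longlongrightarrow> g (1 - 0)) (at_right 0)"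
    by (rule continuous_on_Icc_at_rightD) simp
  moreover have "g 1 = suminf c" unfolding g_def by simp
  ultimately show ?thesis unfolding g_def by simp
qed

lemma euler_sum_tm2:
  assumes "a \<ge> 2" "b \<ge> 1" "sg z1" "sg z2"
  shows "euler_sum [(a, z1), (b, z2)] = suminf (tm a z1 b z2)"
proof -
  have sm: "summable (tm a z1 b z2)"
    using summable_abs_tm2[OF assms(1,3,4,2)] summable_rabs_cancel by blast
  have "T a z1 b z2 \<longlonglongrightarrow> suminf (tm a z1 b z2)" using T_conv_summable[OF _ sm] assms by simp
  then show ?thesis unfolding euler_sum_T by (simp add: limI)
qed

lemma shuffle_2:
  assumes "a \<ge> 2" "b \<ge> 1" "sg z"
  shows "((\<lambda>e. iter_int_eps [(a, 1), (b, z)] e - poly [: euler_sum [(a, 1), (b, z)] :] (- ln e)) \<longlongrightarrow> 0) (at_right 0)"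
proof -
  have sg1: "sg 1" by (simp add: sg_def)
  have L: "((\<lambda>e. (\<Sum>n. tm a 1 b z n * (1 - e) ^ n) - suminf (tm a 1 b z)) \<longlongrightarrow> suminf (tm a 1 b z) - suminf (tm a 1 b z)) (at_right 0)"
    by (intro tendsto_diff abel_abs summable_abs_tm2 assms sg1 tendsto_const)
  have ev: "eventually (\<lambda>e. (\<Sum>n. tm a 1 b z n * (1 - e) ^ n) - suminf (tm a 1 b z)
      = iter_int_eps [(a, 1), (b, z)] e - poly [: euler_sum [(a, 1), (b, z)] :] (- ln e)) (at_right 0)"
  proof -
    have "eventually (\<lambda>e::real. 0 < e \<and> e < 1) (at_right 0)"
      using eventually_at_right_real[of 0 "1::real"] by simp
    then show ?thesis
    proof eventually_elim
      case (elim e)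
      then show ?case using iter_eps_series[OF _ assms(2,3), of a e] assms(1)
        euler_sum_tm2[OF assms(1,2) sg1 assms(3)] by simp
    qed
  qed
  show ?thesis using tendsto_cong[OF ev] L by simp
qed

lemma tm11: "tm 1 1 b z n = Z b z * (1 / real n) - rr b z n"
  by (cases "n = 0") (simp_all add: tm_def rr_def field_simps)

lemma shuffle_1:
  assumes "sg z" "b \<ge> 1" "b \<ge> 2 \<or> z = -1"
  shows "((\<lambda>e. iter_int_eps [(1, 1), (b, z)] e - poly [: - suminf (rr b z), Z b z :] (- ln e)) \<longlongrightarrow> 0) (at_right 0)"
proof -
  have L: "((\<lambda>e. - ((\<Sum>n. rr b z n * (1 - e) ^ n) - suminf (rr b z))) \<longlongrightarrow> - (suminf (rr b z) - suminf (rr b z))) (at_right 0)"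
    by (intro tendsto_minus tendsto_diff abel_abs summable_abs_rr assms tendsto_const)
  have ev: "eventually (\<lambda>e. - ((\<Sum>n. rr b z n * (1 - e) ^ n) - suminf (rr b z))
      = iter_int_eps [(1, 1), (b, z)] e - poly [: - suminf (rr b z), Z b z :] (- ln e)) (at_right 0)"
  proof -
    have "eventually (\<lambda>e::real. 0 < e \<and> e < 1) (at_right 0)"
      using eventually_at_right_real[of 0 "1::real"] by simp
    then show ?thesis
    proof eventually_elim
      case (elim e)
      define u where "u = 1 - e"
      have u: "0 < u" "u < 1" using elim by (auto simp: u_def)
      have "(\<lambda>n. - ((- (- u)) ^ n) / real n) sums ln (1 + - u)"
        using ln_series'[of "- u"] u by simp
      then have s1: "(\<lambda>n. 1 / real n * u ^ n) sums (- ln e)"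
        using sums_minus[of "\<lambda>n. - ((- (- u)) ^ n) / real n" "ln (1 + - u)"] by (simp add: u_def)
      have s2: "summable (\<lambda>n. rr b z n * u ^ n)"
      proof (rule summable_comparison_test'[OF summable_abs_rr[OF assms], of 0])
        fix n :: nat
        have "\<bar>u ^ n\<bar> \<le> 1" using u by (simp add: power_le_one power_abs)
        then have "\<bar>rr b z n\<bar> * \<bar>u ^ n\<bar> \<le> \<bar>rr b z n\<bar> * 1" by (intro mult_left_mono) auto
        then show "norm (rr b z n * u ^ n) \<le> \<bar>rr b z n\<bar>" by (simp add: abs_mult)
      qed
      have "(\<lambda>n. Z b z * (1 / real n * u ^ n) - rr b z n * u ^ n) sums (Z b z * (- ln e) - (\<Sum>n. rr b z n * u ^ n))"
        by (intro sums_diff sums_mult s1 summable_sums s2)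
      moreover have "(\<lambda>n. Z b z * (1 / real n * u ^ n) - rr b z n * u ^ n) = (\<lambda>n. tm 1 1 b z n * u ^ n)"
        unfolding tm11 by (simp add: algebra_simps)
      ultimately have "(\<Sum>n. tm 1 1 b z n * u ^ n) = Z b z * (- ln e) - (\<Sum>n. rr b z n * u ^ n)"
        by (simp add: sums_iff)
      moreover have "iter_int_eps [(1, 1), (b, z)] e = (\<Sum>n. tm 1 1 b z n * u ^ n)"
        unfolding u_def by (rule iter_eps_series) (use assms elim in auto)
      ultimately show ?case by (simp add: u_def algebra_simps)
    qed
  qed
  show ?thesis using tendsto_cong[OF ev] L by simp
qed

definition AA :: "nat \<Rightarrow> real \<Rightarrow> real \<Rightarrow> real \<Rightarrow> real \<Rightarrow> real" where
  "AA k x y p q = (\<Sum>i\<le>k. x ^ i * y ^ (k - i) / (p ^ Suc i * q ^ Suc (k - i)))"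

definition CC :: "nat \<Rightarrow> real \<Rightarrow> real \<Rightarrow> real \<Rightarrow> real \<Rightarrow> real" where
  "CC j x y p q = y ^ j / q ^ Suc j + x ^ j / p ^ Suc j"

definition BB :: "nat \<Rightarrow> real \<Rightarrow> real \<Rightarrow> real \<Rightarrow> real \<Rightarrow> real" where
  "BB k x y p q = (\<Sum>i\<le>k. (x + y) ^ i / (p + q) ^ Suc i * CC (k - i) x y p q)"

lemma AA_rec1:
  assumes "p > 0" "q > 0"
  shows "p * AA (Suc k) x y p q = y ^ Suc k / q ^ Suc (Suc k) + x * AA k x y p q"
proof -
  have "AA (Suc k) x y p q = y ^ Suc k / (p * q ^ Suc (Suc k))
      + (\<Sum>i\<le>k. x ^ Suc i * y ^ (Suc k - Suc i) / (p ^ Suc (Suc i) * q ^ Suc (Suc k - Suc i)))"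
    unfolding AA_def by (subst sum.atMost_Suc_shift) simp
  also have "(\<Sum>i\<le>k. x ^ Suc i * y ^ (Suc k - Suc i) / (p ^ Suc (Suc i) * q ^ Suc (Suc k - Suc i)))
      = (x / p) * AA k x y p q"
    unfolding AA_def sum_distrib_left
    by (intro sum.cong) (use assms in \<open>auto simp: field_simps\<close>)
  finally show ?thesis using assms by (simp add: field_simps)
qed

lemma AA_rec2:
  assumes "p > 0" "q > 0"
  shows "q * AA (Suc k) x y p q = x ^ Suc k / p ^ Suc (Suc k) + y * AA k x y p q"
proof -
  have "AA (Suc k) x y p q = (\<Sum>i\<le>k. x ^ i * y ^ (Suc k - i) / (p ^ Suc i * q ^ Suc (Suc k - i)))
      + x ^ Suc k / (p ^ Suc (Suc k) * q)"
    unfolding AA_def by (subst sum.atMost_Suc) simp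
  also have "(\<Sum>i\<le>k. x ^ i * y ^ (Suc k - i) / (p ^ Suc i * q ^ Suc (Suc k - i)))
      = (y / q) * AA k x y p q"
    unfolding AA_def sum_distrib_left
  proof (intro sum.cong refl)
    fix i assume "i \<in> {..k}"
    then have i: "Suc k - i = Suc (k - i)" by auto
    show "x ^ i * y ^ (Suc k - i) / (p ^ Suc i * q ^ Suc (Suc k - i))
       = y / q * (x ^ i * y ^ (k - i) / (p ^ Suc i * q ^ Suc (k - i)))"
      unfolding i using assms by (simp add: field_simps)
  qed
  finally show ?thesis using assms by (simp add: field_simps)
qed

lemma BB_rec:
  "BB (Suc k) x y p q = CC (Suc k) x y p q / (p + q) + ((x + y) / (p + q)) * BB k x y p q"
proof -
  have "BB (Suc k) x y p q = CC (Suc k) x y p q / (p + q)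
     + (\<Sum>i\<le>k. (x + y) ^ Suc i / (p + q) ^ Suc (Suc i) * CC (Suc k - Suc i) x y p q)"
    unfolding BB_def by (subst sum.atMost_Suc_shift) simp
  also have "(\<Sum>i\<le>k. (x + y) ^ Suc i / (p + q) ^ Suc (Suc i) * CC (Suc k - Suc i) x y p q)
      = ((x + y) / (p + q)) * BB k x y p q"
    unfolding BB_def sum_distrib_left by (intro sum.cong) (auto simp: field_simps)
  finally show ?thesis .
qed

lemma AA_BB:
  assumes "p > 0" "q > 0"
  shows "AA k x y p q = BB k x y p q"
proof (induction k)
  case 0
  then show ?case using assms by (simp add: AA_def BB_def CC_def field_simps)
next
  case (Suc k)
  have h: "(p + q) * AA (Suc k) x y p q = CC (Suc k) x y p q + (x + y) * AA k x y p q"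
    using AA_rec1[OF assms, of k x y] AA_rec2[OF assms, of k x y]
    by (simp add: CC_def algebra_simps)
  have pq: "p + q \<noteq> 0" using assms by simp
  define R where "R = CC (Suc k) x y p q"
  define A0 where "A0 = AA k x y p q"
  define A1 where "A1 = AA (Suc k) x y p q"
  have h': "(p + q) * A1 = R + (x + y) * A0" using h unfolding R_def A0_def A1_def .
  have "A1 = R / (p + q) + ((x + y) / (p + q)) * A0"
  proof -
    have "A1 = ((p + q) * A1) / (p + q)" using pq by simp
    also have "\<dots> = (R + (x + y) * A0) / (p + q)" by (simp only: h')
    also have "\<dots> = R / (p + q) + ((x + y) / (p + q)) * A0" by (simp add: add_divide_distrib algebra_simps)
    finally show ?thesis .
  qed
  then show ?case using Suc BB_rec unfolding R_def A0_def A1_def by simp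
qed

lemma AA_swap:
  "(\<Sum>i\<le>k. y ^ i * x ^ (k - i) / (q ^ Suc i * p ^ Suc (k - i))) = AA k x y p q"
  unfolding AA_def
proof (rule sum.reindex_bij_witness[of _ "\<lambda>i. k - i" "\<lambda>i. k - i"])
  fix i assume "i \<in> {..k}"
  then show "k - (k - i) = i" "k - i \<in> {..k}" by auto
next
  fix i assume i: "i \<in> {..k}"
  then have "k - (k - i) = i" by auto
  then show "x ^ (k - i) * y ^ (k - (k - i)) / (p ^ Suc (k - i) * q ^ Suc (k - (k - i)))
      = y ^ i * x ^ (k - i) / (q ^ Suc i * p ^ Suc (k - i))"
    by (simp add: mult.commute)
qed auto

lemma AA_diag:
  "AA k x y p p = (\<Sum>j\<le>k. x ^ j * y ^ (k - j)) / p ^ Suc (Suc k)"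
  unfolding AA_def sum_divide_distrib
proof (intro sum.cong refl)
  fix i assume "i \<in> {..k}"
  then have "Suc i + Suc (k - i) = Suc (Suc k)" by auto
  then have "p ^ Suc i * p ^ Suc (k - i) = p ^ Suc (Suc k)" by (metis power_add)
  then show "x ^ i * y ^ (k - i) / (p ^ Suc i * p ^ Suc (k - i)) = x ^ i * y ^ (k - i) / p ^ Suc (Suc k)"
    by simp
qed

lemma T_double:
  "T a z b z' M = (\<Sum>N=1..M. \<Sum>j=1..N-1. z ^ N * z' ^ j / (real N ^ a * real j ^ b))"
  unfolding T_eq tm_def S_eq
  by (intro sum.cong refl) (simp add: sum_distrib_left field_simps)

lemma swap3:
  fixes f :: "nat \<Rightarrow> nat \<Rightarrow> nat \<Rightarrow> real"
  assumes "finite I" "finite A" "\<And>N. finite (B N)"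
  shows "(\<Sum>i\<in>I. c i * (\<Sum>N\<in>A. \<Sum>j\<in>B N. f i N j)) = (\<Sum>N\<in>A. \<Sum>j\<in>B N. \<Sum>i\<in>I. c i * f i N j)"
proof -
  have "(\<Sum>i\<in>I. c i * (\<Sum>N\<in>A. \<Sum>j\<in>B N. f i N j)) = (\<Sum>i\<in>I. \<Sum>N\<in>A. \<Sum>j\<in>B N. c i * f i N j)"
    by (simp add: sum_distrib_left)
  also have "\<dots> = (\<Sum>N\<in>A. \<Sum>i\<in>I. \<Sum>j\<in>B N. c i * f i N j)" by (rule sum.swap)
  also have "\<dots> = (\<Sum>N\<in>A. \<Sum>j\<in>B N. \<Sum>i\<in>I. c i * f i N j)"
    by (rule sum.cong[OF refl], rule sum.swap)
  finally show ?thesis .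
qed

lemma box_split:
  fixes h :: "nat \<Rightarrow> nat \<Rightarrow> real"
  shows "(\<Sum>n=1..M. \<Sum>m=1..M. h n m) = (\<Sum>n=1..M. \<Sum>m=1..n-1. h n m)
     + (\<Sum>m=1..M. \<Sum>n=1..m-1. h n m) + (\<Sum>n=1..M. h n n)"
proof (induction M)
  case 0 then show ?case by simp
next
  case (Suc M)
  have "(\<Sum>n=1..Suc M. \<Sum>m=1..Suc M. h n m) = (\<Sum>n=1..M. \<Sum>m=1..M. h n m)
     + (\<Sum>n=1..M. h n (Suc M)) + (\<Sum>m=1..M. h (Suc M) m) + h (Suc M) (Suc M)"
    by (simp add: sum.distrib)
  then show ?case using Suc by (simp add: sum.distrib)
qed

lemma RI1:
  fixes F :: "nat \<Rightarrow> nat \<Rightarrow> real"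
  shows "(\<Sum>n=1..M. \<Sum>m\<in>{m\<in>{1..M}. n + m \<le> M}. F (n + m) m) = (\<Sum>N=1..M. \<Sum>j=1..N-1. F N j)"
proof -
  have l: "(\<Sum>n=1..M. \<Sum>m\<in>{m\<in>{1..M}. n + m \<le> M}. F (n + m) m)
      = (\<Sum>(n, m)\<in>(SIGMA n:{1..M}. {m\<in>{1..M}. n + m \<le> M}). F (n + m) m)"
    by (rule sum.Sigma) auto
  have r: "(\<Sum>N=1..M. \<Sum>j=1..N-1. F N j) = (\<Sum>(N, j)\<in>(SIGMA N:{1..M}. {1..N-1}). F N j)"
    by (rule sum.Sigma) auto
  have "(\<Sum>(N, j)\<in>(SIGMA N:{1..M}. {1..N-1}). F N j)
      = (\<Sum>(n, m)\<in>(SIGMA n:{1..M}. {m\<in>{1..M}. n + m \<le> M}). F (n + m) m)"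
    by (rule sum.reindex_bij_witness[where i="\<lambda>(n, m). (n + m, m)" and j="\<lambda>(N, j). (N - j, j)"]) auto
  then show ?thesis using l r by simp
qed

lemma RI2:
  fixes F :: "nat \<Rightarrow> nat \<Rightarrow> real"
  shows "(\<Sum>n=1..M. \<Sum>m\<in>{m\<in>{1..M}. n + m \<le> M}. F (n + m) n) = (\<Sum>N=1..M. \<Sum>j=1..N-1. F N j)"
proof -
  have l: "(\<Sum>n=1..M. \<Sum>m\<in>{m\<in>{1..M}. n + m \<le> M}. F (n + m) n)
      = (\<Sum>(n, m)\<in>(SIGMA n:{1..M}. {m\<in>{1..M}. n + m \<le> M}). F (n + m) n)"
    by (rule sum.Sigma) auto
  have r: "(\<Sum>N=1..M. \<Sum>j=1..N-1. F N j) = (\<Sum>(N, j)\<in>(SIGMA N:{1..M}. {1..N-1}). F N j)"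
    by (rule sum.Sigma) auto
  have "(\<Sum>(N, j)\<in>(SIGMA N:{1..M}. {1..N-1}). F N j)
      = (\<Sum>(n, m)\<in>(SIGMA n:{1..M}. {m\<in>{1..M}. n + m \<le> M}). F (n + m) n)"
    by (rule sum.reindex_bij_witness[where i="\<lambda>(n, m). (n + m, n)" and j="\<lambda>(N, j). (j, N - j)"]) auto
  then show ?thesis using l r by simp
qed

lemma sum_split_filter:
  fixes f :: "nat \<Rightarrow> real"
  assumes "finite A"
  shows "sum f A = sum f {m\<in>A. P m} + sum f {m\<in>A. \<not> P m}"
proof -
  have "sum f A = (\<Sum>m\<in>A. if P m then f m else f m)" by simp
  also have "\<dots> = sum f (A \<inter> {m. P m}) + sum f (A \<inter> - {m. P m})"
    by (rule sum.If_cases[OF assms])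
  also have "A \<inter> {m. P m} = {m\<in>A. P m}" by auto
  also have "A \<inter> - {m. P m} = {m\<in>A. \<not> P m}" by auto
  finally show ?thesis .
qed

lemma sg_split1:
  assumes "sg z1" "sg z2"
  shows "z1 ^ n * z2 ^ m = z1 ^ (n + m) * (z1 * z2) ^ m"
proof -
  have "z1 ^ (n + m) * (z1 * z2) ^ m = z1 ^ n * (z1 ^ m * z1 ^ m) * z2 ^ m"
    by (simp add: power_add power_mult_distrib mult_ac)
  then show ?thesis using sg_pow_sq[OF assms(1)] by simp
qed

lemma sg_split2:
  assumes "sg z1" "sg z2"
  shows "z1 ^ n * z2 ^ m = z2 ^ (n + m) * (z1 * z2) ^ n"
  using sg_split1[OF assms(2,1), of m n] by (simp add: mult_ac add.commute)

definition gg :: "nat \<Rightarrow> real \<Rightarrow> real \<Rightarrow> real \<Rightarrow> real \<Rightarrow> nat \<Rightarrow> nat \<Rightarrow> real" where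
  "gg k x y z1 z2 n m = z1 ^ n * z2 ^ m * AA k x y (real n) (real m)"

definition fk :: "nat \<Rightarrow> real \<Rightarrow> real \<Rightarrow> real" where
  "fk k x y = (\<Sum>j\<le>k. x ^ j * y ^ (k - j))"

lemma Tsum_eq:
  fixes c :: "nat \<Rightarrow> real"
  shows "(\<Sum>i\<le>k. c i * T (Suc i) z (Suc (k - i)) z' M)
     = (\<Sum>N=1..M. \<Sum>j=1..N-1. \<Sum>i\<le>k. c i * (z ^ N * z' ^ j / (real N ^ Suc i * real j ^ Suc (k - i))))"
  unfolding T_double by (rule swap3) auto

lemma box_eq:
  "(\<Sum>n=1..M. \<Sum>m=1..M. gg k x y z1 z2 n m)
   = (\<Sum>i\<le>k. x ^ i * y ^ (k - i) * T (Suc i) z1 (Suc (k - i)) z2 M)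
   + (\<Sum>i\<le>k. y ^ i * x ^ (k - i) * T (Suc i) z2 (Suc (k - i)) z1 M)
   + fk k x y * S (Suc (Suc k)) (z1 * z2) M"
proof -
  have lo: "(\<Sum>i\<le>k. x ^ i * y ^ (k - i) * T (Suc i) z1 (Suc (k - i)) z2 M)
      = (\<Sum>n=1..M. \<Sum>m=1..n-1. gg k x y z1 z2 n m)"
    unfolding Tsum_eq
  proof (intro sum.cong refl)
    fix N j
    show "(\<Sum>i\<le>k. x ^ i * y ^ (k - i) * (z1 ^ N * z2 ^ j / (real N ^ Suc i * real j ^ Suc (k - i))))
        = gg k x y z1 z2 N j"
      unfolding gg_def AA_def sum_distrib_left by (intro sum.cong refl) (simp add: field_simps)
  qed
  have up: "(\<Sum>i\<le>k. y ^ i * x ^ (k - i) * T (Suc i) z2 (Suc (k - i)) z1 M)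
      = (\<Sum>m=1..M. \<Sum>n=1..m-1. gg k x y z1 z2 n m)"
    unfolding Tsum_eq
  proof (intro sum.cong refl)
    fix N j
    have "(\<Sum>i\<le>k. y ^ i * x ^ (k - i) * (z2 ^ N * z1 ^ j / (real N ^ Suc i * real j ^ Suc (k - i))))
        = z1 ^ j * z2 ^ N * (\<Sum>i\<le>k. y ^ i * x ^ (k - i) / (real N ^ Suc i * real j ^ Suc (k - i)))"
      unfolding sum_distrib_left by (intro sum.cong refl) (simp add: field_simps)
    also have "\<dots> = gg k x y z1 z2 j N" unfolding gg_def AA_swap ..
    finally show "(\<Sum>i\<le>k. y ^ i * x ^ (k - i) * (z2 ^ N * z1 ^ j / (real N ^ Suc i * real j ^ Suc (k - i))))
        = gg k x y z1 z2 j N" .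
  qed
  have di: "(\<Sum>n=1..M. gg k x y z1 z2 n n) = fk k x y * S (Suc (Suc k)) (z1 * z2) M"
    unfolding S_eq sum_distrib_left
  proof (intro sum.cong refl)
    fix n
    show "gg k x y z1 z2 n n = fk k x y * ((z1 * z2) ^ n / real n ^ Suc (Suc k))"
      unfolding gg_def AA_diag fk_def by (simp add: power_mult_distrib field_simps)
  qed
  show ?thesis unfolding lo up di[symmetric] by (rule box_split)
qed

lemma fld: "(Q::real) * (P / D * (Y / my + X / nx)) = P * Y * (Q / (D * my)) + P * X * (Q / (D * nx))"
  by (simp add: distrib_left times_divide_times_eq mult_ac)

lemma gg_split:
  assumes "sg z1" "sg z2" "n \<ge> 1" "m \<ge> 1"
  shows "gg k x y z1 z2 n m
    = (\<Sum>i\<le>k. ((x + y) ^ i * y ^ (k - i)) * (z1 ^ (n + m) * (z1 * z2) ^ m / (real (n + m) ^ Suc i * real m ^ Suc (k - i))))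
    + (\<Sum>i\<le>k. ((x + y) ^ i * x ^ (k - i)) * (z2 ^ (n + m) * (z1 * z2) ^ n / (real (n + m) ^ Suc i * real n ^ Suc (k - i))))"
proof -
  have e1: "z1 ^ (n + m) * (z1 * z2) ^ m = z1 ^ n * z2 ^ m" using sg_split1[OF assms(1,2)] by simp
  have e2: "z2 ^ (n + m) * (z1 * z2) ^ n = z1 ^ n * z2 ^ m" using sg_split2[OF assms(1,2)] by simp
  have np: "real n > 0" "real m > 0" using assms by auto
  have "gg k x y z1 z2 n m = z1 ^ n * z2 ^ m * BB k x y (real n) (real m)"
    unfolding gg_def using AA_BB[OF np] by simp
  also have "\<dots> = (\<Sum>i\<le>k. ((x + y) ^ i * y ^ (k - i)) * (z1 ^ n * z2 ^ m / (real (n + m) ^ Suc i * real m ^ Suc (k - i)))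
           + ((x + y) ^ i * x ^ (k - i)) * (z1 ^ n * z2 ^ m / (real (n + m) ^ Suc i * real n ^ Suc (k - i))))"
    unfolding BB_def CC_def sum_distrib_left of_nat_add
    by (intro sum.cong refl) (rule fld)
  also have "\<dots> = (\<Sum>i\<le>k. ((x + y) ^ i * y ^ (k - i)) * (z1 ^ (n + m) * (z1 * z2) ^ m / (real (n + m) ^ Suc i * real m ^ Suc (k - i))))
    + (\<Sum>i\<le>k. ((x + y) ^ i * x ^ (k - i)) * (z2 ^ (n + m) * (z1 * z2) ^ n / (real (n + m) ^ Suc i * real n ^ Suc (k - i))))"
    unfolding e1 e2 by (rule sum.distrib)
  finally show ?thesis .
qed

lemma tri_eq:
  assumes "sg z1" "sg z2"
  shows "(\<Sum>n=1..M. \<Sum>m\<in>{m\<in>{1..M}. n + m \<le> M}. gg k x y z1 z2 n m)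
   = (\<Sum>i\<le>k. (x + y) ^ i * (y ^ (k - i) * T (Suc i) z1 (Suc (k - i)) (z1 * z2) M
                             + x ^ (k - i) * T (Suc i) z2 (Suc (k - i)) (z1 * z2) M))"
proof -
  define FY where "FY = (\<lambda>N j. \<Sum>i\<le>k. ((x + y) ^ i * y ^ (k - i)) * (z1 ^ N * (z1 * z2) ^ j / (real N ^ Suc i * real j ^ Suc (k - i))))"
  define FX where "FX = (\<lambda>N j. \<Sum>i\<le>k. ((x + y) ^ i * x ^ (k - i)) * (z2 ^ N * (z1 * z2) ^ j / (real N ^ Suc i * real j ^ Suc (k - i))))"
  have "(\<Sum>n=1..M. \<Sum>m\<in>{m\<in>{1..M}. n + m \<le> M}. gg k x y z1 z2 n m)
     = (\<Sum>n=1..M. \<Sum>m\<in>{m\<in>{1..M}. n + m \<le> M}. FY (n + m) m + FX (n + m) n)"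
  proof (intro sum.cong refl)
    fix n m assume "n \<in> {1..M}" "m \<in> {m\<in>{1..M}. n + m \<le> M}"
    then show "gg k x y z1 z2 n m = FY (n + m) m + FX (n + m) n"
      unfolding FY_def FX_def using gg_split[OF assms, of n m k x y] by auto
  qed
  also have "\<dots> = (\<Sum>n=1..M. \<Sum>m\<in>{m\<in>{1..M}. n + m \<le> M}. FY (n + m) m)
        + (\<Sum>n=1..M. \<Sum>m\<in>{m\<in>{1..M}. n + m \<le> M}. FX (n + m) n)"
    by (simp add: sum.distrib)
  also have "\<dots> = (\<Sum>N=1..M. \<Sum>j=1..N-1. FY N j) + (\<Sum>N=1..M. \<Sum>j=1..N-1. FX N j)"
    unfolding RI1 RI2 ..
  also have "(\<Sum>N=1..M. \<Sum>j=1..N-1. FY N j) = (\<Sum>i\<le>k. ((x + y) ^ i * y ^ (k - i)) * T (Suc i) z1 (Suc (k - i)) (z1 * z2) M)"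
    unfolding Tsum_eq FY_def ..
  also have "(\<Sum>N=1..M. \<Sum>j=1..N-1. FX N j) = (\<Sum>i\<le>k. ((x + y) ^ i * x ^ (k - i)) * T (Suc i) z2 (Suc (k - i)) (z1 * z2) M)"
    unfolding Tsum_eq FX_def ..
  finally show ?thesis by (simp add: sum.distrib[symmetric] algebra_simps)
qed

lemma box_tri_d:
  fixes h :: "nat \<Rightarrow> nat \<Rightarrow> real"
  shows "(\<Sum>n=1..M. \<Sum>m=1..M. h n m) = (\<Sum>n=1..M. \<Sum>m\<in>{m\<in>{1..M}. n + m \<le> M}. h n m)
     + (\<Sum>n=1..M. \<Sum>m\<in>{m\<in>{1..M}. \<not> n + m \<le> M}. (h n m :: real))"
proof -
  have "(\<Sum>n=1..M. \<Sum>m=1..M. h n m) = (\<Sum>n=1..M. (\<Sum>m\<in>{m\<in>{1..M}. n + m \<le> M}. h n m)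
     + (\<Sum>m\<in>{m\<in>{1..M}. \<not> n + m \<le> M}. h n m))"
    by (intro sum.cong refl sum_split_filter) simp
  also have "\<dots> = (\<Sum>n=1..M. \<Sum>m\<in>{m\<in>{1..M}. n + m \<le> M}. h n m)
     + (\<Sum>n=1..M. \<Sum>m\<in>{m\<in>{1..M}. \<not> n + m \<le> M}. h n m)"
    by (rule sum.distrib)
  finally show ?thesis .
qed

lemma D_swap:
  fixes h :: "nat \<Rightarrow> nat \<Rightarrow> real"
  shows "(\<Sum>n=1..M. \<Sum>m\<in>{m\<in>{1..M}. \<not> n + m \<le> M}. (h n m :: real))
   = (\<Sum>n=1..M. \<Sum>m\<in>{m\<in>{1..M}. \<not> n + m \<le> M}. h m n)"
proof -
  have "(\<Sum>n=1..M. \<Sum>m\<in>{m\<in>{1..M}. \<not> n + m \<le> M}. h n m)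
      = (\<Sum>m=1..M. \<Sum>n\<in>{n\<in>{1..M}. \<not> n + m \<le> M}. h n m)"
    by (rule sum.swap_restrict) auto
  also have "\<dots> = (\<Sum>n=1..M. \<Sum>m\<in>{m\<in>{1..M}. \<not> n + m \<le> M}. h m n)"
    by (simp add: add.commute)
  finally show ?thesis .
qed

lemma inv_term_bound:
  assumes "k \<ge> 1" "i \<le> k" "n \<ge> 1" "m \<ge> 1"
  shows "1 / (real n ^ Suc i * real m ^ Suc (k - i))
     \<le> 1 / (real n ^ 2 * real m) + 1 / (real n * real m ^ 2)"
proof (cases "i = 0")
  case True
  have m2: "real m ^ 2 \<le> real m ^ Suc (k - i)" using True assms by (intro power_increasing) auto
  have "real n * real m ^ 2 \<le> real n * real m ^ Suc (k - i)" using m2 by (intro mult_left_mono) auto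
  then have "real n * real m ^ 2 \<le> real n ^ Suc i * real m ^ Suc (k - i)" using True by simp
  then have "1 / (real n ^ Suc i * real m ^ Suc (k - i)) \<le> 1 / (real n * real m ^ 2)"
    using assms by (intro divide_left_mono) auto
  moreover have "0 \<le> 1 / (real n ^ 2 * real m)" by simp
  ultimately show ?thesis by linarith
next
  case False
  have a: "real n ^ 2 \<le> real n ^ Suc i" using False assms by (intro power_increasing) auto
  have b: "real m \<le> real m ^ Suc (k - i)" using assms
    by (metis One_nat_def Suc_le_mono le0 of_nat_1 of_nat_le_iff power_increasing power_one_right)
  have "real n ^ 2 * real m \<le> real n ^ Suc i * real m ^ Suc (k - i)"
    using a b assms by (intro mult_mono) auto
  then have "1 / (real n ^ Suc i * real m ^ Suc (k - i)) \<le> 1 / (real n ^ 2 * real m)"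
    using assms by (intro divide_left_mono) auto
  moreover have "0 \<le> 1 / (real n * real m ^ 2)" by simp
  ultimately show ?thesis by linarith
qed

definition fka :: "nat \<Rightarrow> real \<Rightarrow> real \<Rightarrow> real" where
  "fka k x y = (\<Sum>i\<le>k. \<bar>x\<bar> ^ i * \<bar>y\<bar> ^ (k - i))"

lemma gg_bound:
  assumes "k \<ge> 1" "n \<ge> 1" "m \<ge> 1" "sg z1" "sg z2"
  shows "\<bar>gg k x y z1 z2 n m\<bar> \<le> fka k x y * (1 / (real n ^ 2 * real m) + 1 / (real n * real m ^ 2))"
proof -
  have "\<bar>gg k x y z1 z2 n m\<bar> = \<bar>AA k x y (real n) (real m)\<bar>"
    unfolding gg_def by (simp add: abs_mult sg_abs_pow assms)
  also have "\<dots> \<le> (\<Sum>i\<le>k. \<bar>x ^ i * y ^ (k - i) / (real n ^ Suc i * real m ^ Suc (k - i))\<bar>)"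
    unfolding AA_def by (rule sum_abs)
  also have "\<dots> \<le> (\<Sum>i\<le>k. \<bar>x\<bar> ^ i * \<bar>y\<bar> ^ (k - i) * (1 / (real n ^ 2 * real m) + 1 / (real n * real m ^ 2)))"
  proof (intro sum_mono)
    fix i assume "i \<in> {..k}"
    then have "1 / (real n ^ Suc i * real m ^ Suc (k - i)) \<le> 1 / (real n ^ 2 * real m) + 1 / (real n * real m ^ 2)"
      using inv_term_bound assms by auto
    then have "\<bar>x\<bar> ^ i * \<bar>y\<bar> ^ (k - i) * (1 / (real n ^ Suc i * real m ^ Suc (k - i)))
       \<le> \<bar>x\<bar> ^ i * \<bar>y\<bar> ^ (k - i) * (1 / (real n ^ 2 * real m) + 1 / (real n * real m ^ 2))"
      by (intro mult_left_mono) auto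
    then show "\<bar>x ^ i * y ^ (k - i) / (real n ^ Suc i * real m ^ Suc (k - i))\<bar>
       \<le> \<bar>x\<bar> ^ i * \<bar>y\<bar> ^ (k - i) * (1 / (real n ^ 2 * real m) + 1 / (real n * real m ^ 2))"
      by (simp add: abs_mult abs_divide power_abs)
  qed
  also have "\<dots> = fka k x y * (1 / (real n ^ 2 * real m) + 1 / (real n * real m ^ 2))"
    unfolding fka_def by (simp add: sum_distrib_right)
  finally show ?thesis .
qed

lemma inner_bound:
  assumes "1 \<le> n" "n \<le> M"
  shows "(\<Sum>m\<in>{m\<in>{1..M}. \<not> n + m \<le> M}. 1 / (real n ^ 2 * real m)) \<le> 1 / (real n * real (Suc M - n))"
proof -
  have sub: "{m\<in>{1..M}. \<not> n + m \<le> M} \<subseteq> {Suc M - n..M}" by auto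
  have c: "card {m\<in>{1..M}. \<not> n + m \<le> M} \<le> n"
  proof -
    have "card {m\<in>{1..M}. \<not> n + m \<le> M} \<le> card {Suc M - n..M}" by (rule card_mono[OF _ sub]) simp
    also have "\<dots> = n" using assms by simp
    finally show ?thesis .
  qed
  have "(\<Sum>m\<in>{m\<in>{1..M}. \<not> n + m \<le> M}. 1 / (real n ^ 2 * real m))
      \<le> real (card {m\<in>{1..M}. \<not> n + m \<le> M}) * (1 / (real n ^ 2 * real (Suc M - n)))"
  proof (rule sum_bounded_above)
    fix m assume "m \<in> {m\<in>{1..M}. \<not> n + m \<le> M}"
    then have "Suc M - n \<le> m" "1 \<le> Suc M - n" using assms by auto
    then show "1 / (real n ^ 2 * real m) \<le> 1 / (real n ^ 2 * real (Suc M - n))"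
      using assms by (intro divide_left_mono mult_left_mono) auto
  qed
  also have "\<dots> \<le> real n * (1 / (real n ^ 2 * real (Suc M - n)))"
    using c by (intro mult_right_mono) auto
  also have "\<dots> = 1 / (real n * real (Suc M - n))"
    using assms by (simp add: power2_eq_square)
  finally show ?thesis .
qed

lemma harm_rev: "(\<Sum>n=1..M. 1 / real (Suc M - n)) = harm M"
proof -
  have "(\<Sum>n=1..M. 1 / real (Suc M - n)) = (\<Sum>n=1..M. (\<lambda>j. 1 / real j) (M + 1 - n))"
    by simp
  also have "\<dots> = (\<Sum>n=1..M. 1 / real n)"
    using sum.atLeastAtMost_rev[of "\<lambda>j. 1 / real j" 1 M] by simp
  also have "\<dots> = harm M" by (simp add: harm_def divide_inverse)
  finally show ?thesis .
qed

lemma outer_eq: "(\<Sum>n=1..M. 1 / (real n * real (Suc M - n))) = 2 * harm M / (real M + 1)"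
proof -
  have "(\<Sum>n=1..M. 1 / (real n * real (Suc M - n)))
      = (\<Sum>n=1..M. (1 / real n + 1 / real (Suc M - n)) / (real M + 1))"
  proof (intro sum.cong refl)
    fix n assume "n \<in> {1..M}"
    then have n: "1 \<le> n" "n \<le> M" by auto
    define q where "q = real (Suc M - n)"
    have e: "real M + 1 = real n + q" unfolding q_def using n by (simp add: of_nat_diff)
    have p: "q > 0" "real n > 0" using n by (auto simp: q_def)
    have pp: "q * (q * real n) + q * (real n * real n) > 0"
      using p by (intro add_pos_pos mult_pos_pos) auto
    have "1 / (real n * q) = (1 / real n + 1 / q) / (real n + q)" using p pp by (simp add: field_simps)
    then show "1 / (real n * real (Suc M - n)) = (1 / real n + 1 / real (Suc M - n)) / (real M + 1)"
      unfolding e q_def .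
  qed
  also have "\<dots> = ((\<Sum>n=1..M. 1 / real n) + (\<Sum>n=1..M. 1 / real (Suc M - n))) / (real M + 1)"
    by (simp only: sum_divide_distrib[symmetric] sum.distrib)
  also have "(\<Sum>n=1..M. 1 / real n) = harm M" by (simp add: harm_def divide_inverse)
  also have "(\<Sum>n=1..M. 1 / real (Suc M - n)) = harm M" by (rule harm_rev)
  finally show ?thesis by simp
qed

lemma D_tendsto:
  assumes "k \<ge> 1" "sg z1" "sg z2"
  shows "(\<lambda>M. \<Sum>n=1..M. \<Sum>m\<in>{m\<in>{1..M}. \<not> n + m \<le> M}. gg k x y z1 z2 n m) \<longlonglongrightarrow> 0"
proof (rule Lim_null_comparison)
  have sq: "(\<lambda>M::nat. sqrt (real M) / (real M + 1)) \<longlonglongrightarrow> 0" by real_asymp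
  show "(\<lambda>M. 8 * fka k x y * (sqrt (real M) / (real M + 1))) \<longlonglongrightarrow> 0"
    using tendsto_mult_right_zero[OF sq, of "8 * fka k x y"] .
  show "\<forall>\<^sub>F M in sequentially. norm (\<Sum>n=1..M. \<Sum>m\<in>{m\<in>{1..M}. \<not> n + m \<le> M}. gg k x y z1 z2 n m)
          \<le> 8 * fka k x y * (sqrt (real M) / (real M + 1))"
  proof (intro always_eventually allI)
    fix M
    define E where "E = (\<lambda>h::nat \<Rightarrow> nat \<Rightarrow> real. \<Sum>n=1..M. \<Sum>m\<in>{m\<in>{1..M}. \<not> n + m \<le> M}. (h n m :: real))"
    have fk0: "0 \<le> fka k x y" unfolding fka_def by (intro sum_nonneg) auto
    have "norm (E (gg k x y z1 z2)) \<le> E (\<lambda>n m. \<bar>gg k x y z1 z2 n m\<bar>)"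
      unfolding E_def real_norm_def
      by (rule order_trans[OF sum_abs]) (intro sum_mono sum_abs)
    also have "\<dots> \<le> E (\<lambda>n m. fka k x y * (1 / (real n ^ 2 * real m) + 1 / (real n * real m ^ 2)))"
      unfolding E_def by (intro sum_mono gg_bound assms) auto
    also have "\<dots> = fka k x y * (E (\<lambda>n m. 1 / (real n ^ 2 * real m)) + E (\<lambda>n m. 1 / (real n * real m ^ 2)))"
      unfolding E_def by (simp add: distrib_left sum_distrib_left sum.distrib)
    also have "E (\<lambda>n m. 1 / (real n * real m ^ 2)) = E (\<lambda>n m. 1 / (real n ^ 2 * real m))"
      unfolding E_def by (subst D_swap) (simp add: mult.commute)
    also have "E (\<lambda>n m. 1 / (real n ^ 2 * real m)) \<le> (\<Sum>n=1..M. 1 / (real n * real (Suc M - n)))"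
      unfolding E_def by (intro sum_mono inner_bound) auto
    also have "\<dots> = 2 * harm M / (real M + 1)" by (rule outer_eq)
    also have "\<dots> \<le> 2 * (2 * sqrt (real M)) / (real M + 1)"
      by (intro divide_right_mono mult_left_mono harm_le_sqrt) auto
    finally have "norm (E (gg k x y z1 z2)) \<le> fka k x y * (2 * (2 * (2 * sqrt (real M)) / (real M + 1)))"
      using fk0 by (simp add: mult_left_mono)
    then show "norm (E (gg k x y z1 z2)) \<le> 8 * fka k x y * (sqrt (real M) / (real M + 1))"
      by (simp add: field_simps)
  qed
qed

abbreviation tM :: "nat \<Rightarrow> real" where "tM M \<equiv> ln (real M) + euler_mascheroni"

lemma DS:
  assumes "k \<ge> 1" "sg z1" "sg z2"
  shows "(\<lambda>M. (\<Sum>i\<le>k. (x + y) ^ i * (y ^ (k - i) * T (Suc i) z1 (Suc (k - i)) (z1 * z2) M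
                             + x ^ (k - i) * T (Suc i) z2 (Suc (k - i)) (z1 * z2) M))
      - ((\<Sum>i\<le>k. x ^ i * y ^ (k - i) * T (Suc i) z1 (Suc (k - i)) z2 M)
        + (\<Sum>i\<le>k. y ^ i * x ^ (k - i) * T (Suc i) z2 (Suc (k - i)) z1 M)
        + fk k x y * S (Suc (Suc k)) (z1 * z2) M)) \<longlonglongrightarrow> 0"
proof -
  have "(\<lambda>M. - (\<Sum>n=1..M. \<Sum>m\<in>{m\<in>{1..M}. \<not> n + m \<le> M}. gg k x y z1 z2 n m)) \<longlonglongrightarrow> - 0"
    by (intro tendsto_minus D_tendsto assms)
  moreover have "\<And>M. - (\<Sum>n=1..M. \<Sum>m\<in>{m\<in>{1..M}. \<not> n + m \<le> M}. gg k x y z1 z2 n m)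
     = (\<Sum>i\<le>k. (x + y) ^ i * (y ^ (k - i) * T (Suc i) z1 (Suc (k - i)) (z1 * z2) M
                             + x ^ (k - i) * T (Suc i) z2 (Suc (k - i)) (z1 * z2) M))
      - ((\<Sum>i\<le>k. x ^ i * y ^ (k - i) * T (Suc i) z1 (Suc (k - i)) z2 M)
        + (\<Sum>i\<le>k. y ^ i * x ^ (k - i) * T (Suc i) z2 (Suc (k - i)) z1 M)
        + fk k x y * S (Suc (Suc k)) (z1 * z2) M)"
  proof -
    fix M
    have e1: "(\<Sum>n=1..M. \<Sum>m=1..M. gg k x y z1 z2 n m) = (\<Sum>n=1..M. \<Sum>m\<in>{m\<in>{1..M}. n + m \<le> M}. gg k x y z1 z2 n m)
     + (\<Sum>n=1..M. \<Sum>m\<in>{m\<in>{1..M}. \<not> n + m \<le> M}. gg k x y z1 z2 n m)" by (rule box_tri_d)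
    have e2: "(\<Sum>n=1..M. \<Sum>m=1..M. gg k x y z1 z2 n m)
     = (\<Sum>i\<le>k. x ^ i * y ^ (k - i) * T (Suc i) z1 (Suc (k - i)) z2 M)
     + (\<Sum>i\<le>k. y ^ i * x ^ (k - i) * T (Suc i) z2 (Suc (k - i)) z1 M)
     + fk k x y * S (Suc (Suc k)) (z1 * z2) M" by (rule box_eq)
    have e3: "(\<Sum>n=1..M. \<Sum>m\<in>{m\<in>{1..M}. n + m \<le> M}. gg k x y z1 z2 n m)
     = (\<Sum>i\<le>k. (x + y) ^ i * (y ^ (k - i) * T (Suc i) z1 (Suc (k - i)) (z1 * z2) M
                             + x ^ (k - i) * T (Suc i) z2 (Suc (k - i)) (z1 * z2) M))"
      by (rule tri_eq[OF assms(2,3)])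
    show "- (\<Sum>n=1..M. \<Sum>m\<in>{m\<in>{1..M}. \<not> n + m \<le> M}. gg k x y z1 z2 n m)
     = (\<Sum>i\<le>k. (x + y) ^ i * (y ^ (k - i) * T (Suc i) z1 (Suc (k - i)) (z1 * z2) M
                             + x ^ (k - i) * T (Suc i) z2 (Suc (k - i)) (z1 * z2) M))
      - ((\<Sum>i\<le>k. x ^ i * y ^ (k - i) * T (Suc i) z1 (Suc (k - i)) z2 M)
        + (\<Sum>i\<le>k. y ^ i * x ^ (k - i) * T (Suc i) z2 (Suc (k - i)) z1 M)
        + fk k x y * S (Suc (Suc k)) (z1 * z2) M)"
      using e1 e2 e3 by linarith
  qed
  ultimately show ?thesis by simp
qed

lemma F1:
  assumes "a \<ge> 1" "b \<ge> 1" "sg z" "a \<ge> 2 \<or> b \<ge> 2 \<or> z = -1"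
  shows "zeta_shuffle [(a, 1), (b, z)] = zeta_stuffle [(a, 1), (b, z)]
    \<and> (\<lambda>M. T a 1 b z M - poly (zeta_stuffle [(a, 1), (b, z)]) (tM M)) \<longlonglongrightarrow> 0"
proof (cases "a \<ge> 2")
  case True
  have sg1: "sg 1" by (simp add: sg_def)
  have c: "T a 1 b z \<longlonglongrightarrow> euler_sum [(a, 1), (b, z)]"
    by (rule T_conv_euler) (use assms True sg1 in auto)
  have l: "(\<lambda>M. T a 1 b z M - poly [: euler_sum [(a, 1), (b, z)] :] (tM M)) \<longlonglongrightarrow> 0"
    using c by (simp add: LIM_zero)
  have st: "zeta_stuffle [(a, 1), (b, z)] = [: euler_sum [(a, 1), (b, z)] :]"
    by (rule zeta_stuffle_eq) (use l in \<open>simp add: T_def\<close>)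
  have sh: "zeta_shuffle [(a, 1), (b, z)] = [: euler_sum [(a, 1), (b, z)] :]"
    by (rule zeta_shuffle_eq[OF shuffle_2[OF True assms(2,3)]])
  show ?thesis using st sh l by simp
next
  case False
  then have a: "a = 1" and bz: "b \<ge> 2 \<or> z = -1" using assms by auto
  have l: "(\<lambda>M. T 1 1 b z M - poly [: - suminf (rr b z), Z b z :] (tM M)) \<longlonglongrightarrow> 0"
    by (rule stuffle_1[OF assms(3,2) bz])
  have st: "zeta_stuffle [(1, 1), (b, z)] = [: - suminf (rr b z), Z b z :]"
    by (rule zeta_stuffle_eq) (use l in \<open>simp add: T_def\<close>)
  have sh: "zeta_shuffle [(1, 1), (b, z)] = [: - suminf (rr b z), Z b z :]"
    by (rule zeta_shuffle_eq[OF shuffle_1[OF assms(3,2) bz]])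
  show ?thesis using st sh l a by simp
qed

lemma lin_comb:
  fixes f g :: "nat \<Rightarrow> nat \<Rightarrow> real"
  assumes "finite I" "\<And>i. i \<in> I \<Longrightarrow> (\<lambda>M. f i M - g i M) \<longlonglongrightarrow> 0"
  shows "(\<lambda>M. (\<Sum>i\<in>I. c i * f i M) - (\<Sum>i\<in>I. c i * g i M)) \<longlonglongrightarrow> 0"
proof -
  have "(\<lambda>M. \<Sum>i\<in>I. c i * (f i M - g i M)) \<longlonglongrightarrow> 0"
    by (intro tendsto_null_sum tendsto_mult_right_zero assms)
  then show ?thesis by (simp add: sum_subtractf right_diff_distrib)
qed

lemma sum_reidx:
  fixes F :: "nat \<Rightarrow> 'a::comm_monoid_add"
  shows "(\<Sum>a=1..Suc k. F a) = (\<Sum>i\<le>k. F (Suc i))"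
  by (simp only: One_nat_def sum.atLeast1_atMost_eq lessThan_Suc_atMost)

lemma fw_eq: "f_w (Suc (Suc k)) x y = fk k x y"
  by (simp add: f_w_def fk_def atLeast0AtMost)

lemma sg1: "sg 1" and sgm1: "sg (-1)" by (simp_all add: sg_def)

lemma null_neg: "(\<lambda>M. f M - g M) \<longlonglongrightarrow> (0::real) \<Longrightarrow> (\<lambda>M. g M - f M) \<longlonglongrightarrow> 0"
  using tendsto_minus[of "\<lambda>M. f M - g M" 0 sequentially] by simp

lemma part1:
  assumes k1: "k \<ge> 1"
  shows "(\<Sum>i\<le>k. smult ((x + y) ^ i * (y ^ (k - i) + x ^ (k - i))) (zeta_shuffle [(Suc i, 1), (Suc (k - i), 1)]))
    = (\<Sum>i\<le>k. smult (x ^ i * y ^ (k - i) + y ^ i * x ^ (k - i)) (zeta_stuffle [(Suc i, 1), (Suc (k - i), 1)]))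
      + [: euler_sum [(Suc (Suc k), 1)] * fk k x y :]"
proof -
  define P where "P i = zeta_stuffle [(Suc i, 1), (Suc (k - i), 1)]" for i
  define Ti where "Ti i M = T (Suc i) 1 (Suc (k - i)) 1 M" for i M
  define c where "c i = (x + y) ^ i * (y ^ (k - i) + x ^ (k - i))" for i
  define d where "d i = x ^ i * y ^ (k - i) + y ^ i * x ^ (k - i)" for i
  define E where "E = euler_sum [(Suc (Suc k), 1)]"
  have F: "zeta_shuffle [(Suc i, 1), (Suc (k - i), 1)] = P i \<and> (\<lambda>M. Ti i M - poly (P i) (tM M)) \<longlonglongrightarrow> 0"
    if "i \<le> k" for i
    unfolding P_def Ti_def by (rule F1) (use that k1 sg1 in auto)
  define L where "L = (\<Sum>i\<le>k. smult (c i) (P i))"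
  define R where "R = (\<Sum>i\<le>k. smult (d i) (P i)) + [: E * fk k x y :]"
  have lhs: "(\<Sum>i\<le>k. smult ((x + y) ^ i * (y ^ (k - i) + x ^ (k - i))) (zeta_shuffle [(Suc i, 1), (Suc (k - i), 1)])) = L"
    unfolding L_def c_def by (intro sum.cong refl) (use F in auto)
  have rhs: "(\<Sum>i\<le>k. smult (x ^ i * y ^ (k - i) + y ^ i * x ^ (k - i)) (zeta_stuffle [(Suc i, 1), (Suc (k - i), 1)]))
      + [: euler_sum [(Suc (Suc k), 1)] * fk k x y :] = R"
    unfolding R_def d_def P_def E_def ..
  have a: "(\<lambda>M. (\<Sum>i\<le>k. c i * poly (P i) (tM M)) - (\<Sum>i\<le>k. c i * Ti i M)) \<longlonglongrightarrow> 0"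
    by (rule lin_comb) (use F null_neg in auto)
  have b: "(\<lambda>M. (\<Sum>i\<le>k. d i * poly (P i) (tM M)) - (\<Sum>i\<le>k. d i * Ti i M)) \<longlonglongrightarrow> 0"
    by (rule lin_comb) (use F null_neg in auto)
  have "S (Suc (Suc k)) 1 \<longlonglongrightarrow> E" unfolding E_def by (rule S_conv_euler[OF sg1]) simp
  then have "(\<lambda>M. S (Suc (Suc k)) 1 M - E) \<longlonglongrightarrow> 0" by (simp add: LIM_zero)
  then have cc: "(\<lambda>M. fk k x y * (S (Suc (Suc k)) 1 M - E)) \<longlonglongrightarrow> 0" by (rule tendsto_mult_right_zero)
  define Shuf where "Shuf M = (\<Sum>i\<le>k. (x + y) ^ i * (y ^ (k - i) * Ti i M + x ^ (k - i) * Ti i M))" for M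
  define Stuff where "Stuff M = (\<Sum>i\<le>k. x ^ i * y ^ (k - i) * Ti i M) + (\<Sum>i\<le>k. y ^ i * x ^ (k - i) * Ti i M)
        + fk k x y * S (Suc (Suc k)) 1 M" for M
  have dd: "(\<lambda>M. Shuf M - Stuff M) \<longlonglongrightarrow> 0"
    using DS[OF k1 sg1 sg1, of x y] unfolding Shuf_def Stuff_def Ti_def by simp
  have eqS: "Shuf M = (\<Sum>i\<le>k. c i * Ti i M)" for M
    unfolding Shuf_def c_def by (intro sum.cong refl) (simp add: algebra_simps)
  have eqT: "Stuff M = (\<Sum>i\<le>k. d i * Ti i M) + fk k x y * S (Suc (Suc k)) 1 M" for M
    unfolding Stuff_def d_def by (simp add: sum.distrib[symmetric] algebra_simps)
  have pL: "poly L t = (\<Sum>i\<le>k. c i * poly (P i) t)" for t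
    unfolding L_def by (simp add: poly_sum)
  have pR: "poly R t = (\<Sum>i\<le>k. d i * poly (P i) t) + E * fk k x y" for t
    unfolding R_def by (simp add: poly_sum)
  have eq: "poly (L - R) (tM M) = ((\<Sum>i\<le>k. c i * poly (P i) (tM M)) - (\<Sum>i\<le>k. c i * Ti i M))
      - ((\<Sum>i\<le>k. d i * poly (P i) (tM M)) - (\<Sum>i\<le>k. d i * Ti i M))
      + fk k x y * (S (Suc (Suc k)) 1 M - E) + (Shuf M - Stuff M)" for M
    using pL[of "tM M"] pR[of "tM M"] eqS[of M] eqT[of M] by (simp add: algebra_simps)
  have "(\<lambda>M. ((\<Sum>i\<le>k. c i * poly (P i) (tM M)) - (\<Sum>i\<le>k. c i * Ti i M))
      - ((\<Sum>i\<le>k. d i * poly (P i) (tM M)) - (\<Sum>i\<le>k. d i * Ti i M))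
      + fk k x y * (S (Suc (Suc k)) 1 M - E) + (Shuf M - Stuff M)) \<longlonglongrightarrow> 0 - 0 + 0 + 0"
    by (intro tendsto_add tendsto_diff a b cc dd)
  then have "(\<lambda>M. poly (L - R) (tM M)) \<longlonglongrightarrow> 0" unfolding eq by simp
  then have "L - R = 0" by (rule poly_tendsto_zero[OF tM_at_top, rotated]) simp
  then show ?thesis unfolding lhs rhs by simp
qed

lemma part2:
  assumes k1: "k \<ge> 1"
  shows "(\<Sum>i\<le>k. smult ((x + y) ^ i * y ^ (k - i)) (zeta_shuffle [(Suc i, 1), (Suc (k - i), -1)])
          + [: (x + y) ^ i * euler_sum [(Suc i, -1), (Suc (k - i), -1)] * x ^ (k - i) :])
    = (\<Sum>i\<le>k. smult (x ^ i * y ^ (k - i)) (zeta_stuffle [(Suc i, 1), (Suc (k - i), -1)])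
          + [: euler_sum [(Suc i, -1), (Suc (k - i), 1)] * y ^ i * x ^ (k - i) :])
      + [: euler_sum [(Suc (Suc k), -1)] * fk k x y :]"
proof -
  define Q where "Q i = zeta_stuffle [(Suc i, 1), (Suc (k - i), -1)]" for i
  define U where "U i M = T (Suc i) 1 (Suc (k - i)) (-1) M" for i M
  define V where "V i M = T (Suc i) (-1) (Suc (k - i)) (-1) M" for i M
  define W where "W i M = T (Suc i) (-1) (Suc (k - i)) 1 M" for i M
  define E2 where "E2 i = euler_sum [(Suc i, -1), (Suc (k - i), -1)]" for i
  define E3 where "E3 i = euler_sum [(Suc i, -1), (Suc (k - i), 1)]" for i
  define E where "E = euler_sum [(Suc (Suc k), -1)]"
  define al where "al i = (x + y) ^ i * y ^ (k - i)" for i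
  define be where "be i = x ^ i * y ^ (k - i)" for i
  define ga where "ga i = (x + y) ^ i * x ^ (k - i)" for i
  define de where "de i = y ^ i * x ^ (k - i)" for i
  have F: "zeta_shuffle [(Suc i, 1), (Suc (k - i), -1)] = Q i \<and> (\<lambda>M. U i M - poly (Q i) (tM M)) \<longlonglongrightarrow> 0"
    if "i \<le> k" for i
    unfolding Q_def U_def by (rule F1) (use that k1 sgm1 in auto)
  have cV: "(\<lambda>M. V i M - E2 i) \<longlonglongrightarrow> 0" if "i \<le> k" for i
  proof -
    have "V i \<longlonglongrightarrow> E2 i" unfolding V_def[abs_def] E2_def by (rule T_conv_euler) (use sgm1 in auto)
    then show ?thesis by (simp add: LIM_zero)
  qed
  have cW: "(\<lambda>M. W i M - E3 i) \<longlonglongrightarrow> 0" if "i \<le> k" for i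
  proof -
    have "W i \<longlonglongrightarrow> E3 i" unfolding W_def[abs_def] E3_def by (rule T_conv_euler) (use that k1 sgm1 sg1 in auto)
    then show ?thesis by (simp add: LIM_zero)
  qed
  define L where "L = (\<Sum>i\<le>k. smult (al i) (Q i) + [: ga i * E2 i :])"
  define R where "R = (\<Sum>i\<le>k. smult (be i) (Q i) + [: de i * E3 i :]) + [: E * fk k x y :]"
  have lhs: "(\<Sum>i\<le>k. smult ((x + y) ^ i * y ^ (k - i)) (zeta_shuffle [(Suc i, 1), (Suc (k - i), -1)])
          + [: (x + y) ^ i * euler_sum [(Suc i, -1), (Suc (k - i), -1)] * x ^ (k - i) :]) = L"
    unfolding L_def al_def ga_def E2_def by (intro sum.cong refl) (use F in \<open>auto simp: algebra_simps\<close>)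
  have rhs: "(\<Sum>i\<le>k. smult (x ^ i * y ^ (k - i)) (zeta_stuffle [(Suc i, 1), (Suc (k - i), -1)])
          + [: euler_sum [(Suc i, -1), (Suc (k - i), 1)] * y ^ i * x ^ (k - i) :])
      + [: euler_sum [(Suc (Suc k), -1)] * fk k x y :] = R"
    unfolding R_def be_def de_def Q_def E3_def E_def by (simp add: algebra_simps)
  have a1: "(\<lambda>M. (\<Sum>i\<le>k. al i * poly (Q i) (tM M)) - (\<Sum>i\<le>k. al i * U i M)) \<longlonglongrightarrow> 0"
    by (rule lin_comb) (use F null_neg in auto)
  have a2: "(\<lambda>M. (\<Sum>i\<le>k. ga i * E2 i) - (\<Sum>i\<le>k. ga i * V i M)) \<longlonglongrightarrow> 0"
    using lin_comb[of "{..k}" "\<lambda>i M. E2 i" "\<lambda>i M. V i M" ga] cV null_neg by auto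
  have b1: "(\<lambda>M. (\<Sum>i\<le>k. be i * poly (Q i) (tM M)) - (\<Sum>i\<le>k. be i * U i M)) \<longlonglongrightarrow> 0"
    by (rule lin_comb) (use F null_neg in auto)
  have b2: "(\<lambda>M. (\<Sum>i\<le>k. de i * E3 i) - (\<Sum>i\<le>k. de i * W i M)) \<longlonglongrightarrow> 0"
    using lin_comb[of "{..k}" "\<lambda>i M. E3 i" "\<lambda>i M. W i M" de] cW null_neg by auto
  have "S (Suc (Suc k)) (-1) \<longlonglongrightarrow> E" unfolding E_def by (rule S_conv_euler[OF sgm1]) simp
  then have "(\<lambda>M. S (Suc (Suc k)) (-1) M - E) \<longlonglongrightarrow> 0" by (simp add: LIM_zero)
  then have cc: "(\<lambda>M. fk k x y * (S (Suc (Suc k)) (-1) M - E)) \<longlonglongrightarrow> 0" by (rule tendsto_mult_right_zero)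
  define Shuf where "Shuf M = (\<Sum>i\<le>k. (x + y) ^ i * (y ^ (k - i) * U i M + x ^ (k - i) * V i M))" for M
  define Stuff where "Stuff M = (\<Sum>i\<le>k. x ^ i * y ^ (k - i) * U i M) + (\<Sum>i\<le>k. y ^ i * x ^ (k - i) * W i M)
        + fk k x y * S (Suc (Suc k)) (-1) M" for M
  have dd: "(\<lambda>M. Shuf M - Stuff M) \<longlonglongrightarrow> 0"
    using DS[OF k1 sg1 sgm1, of x y] unfolding Shuf_def Stuff_def U_def V_def W_def by simp
  have eqS: "Shuf M = (\<Sum>i\<le>k. al i * U i M) + (\<Sum>i\<le>k. ga i * V i M)" for M
    unfolding Shuf_def al_def ga_def by (simp add: sum.distrib[symmetric] algebra_simps)
  have eqT: "Stuff M = (\<Sum>i\<le>k. be i * U i M) + (\<Sum>i\<le>k. de i * W i M) + fk k x y * S (Suc (Suc k)) (-1) M" for M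
    unfolding Stuff_def be_def de_def by simp
  have pL: "poly L t = (\<Sum>i\<le>k. al i * poly (Q i) t) + (\<Sum>i\<le>k. ga i * E2 i)" for t
    unfolding L_def by (simp add: poly_sum sum.distrib)
  have pR: "poly R t = (\<Sum>i\<le>k. be i * poly (Q i) t) + (\<Sum>i\<le>k. de i * E3 i) + E * fk k x y" for t
    unfolding R_def by (simp add: poly_sum sum.distrib)
  have eq: "poly (L - R) (tM M) = ((\<Sum>i\<le>k. al i * poly (Q i) (tM M)) - (\<Sum>i\<le>k. al i * U i M))
      + ((\<Sum>i\<le>k. ga i * E2 i) - (\<Sum>i\<le>k. ga i * V i M))
      - ((\<Sum>i\<le>k. be i * poly (Q i) (tM M)) - (\<Sum>i\<le>k. be i * U i M))
      - ((\<Sum>i\<le>k. de i * E3 i) - (\<Sum>i\<le>k. de i * W i M))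
      + fk k x y * (S (Suc (Suc k)) (-1) M - E) + (Shuf M - Stuff M)" for M
    using pL[of "tM M"] pR[of "tM M"] eqS[of M] eqT[of M] by (simp add: algebra_simps)
  have "(\<lambda>M. ((\<Sum>i\<le>k. al i * poly (Q i) (tM M)) - (\<Sum>i\<le>k. al i * U i M))
      + ((\<Sum>i\<le>k. ga i * E2 i) - (\<Sum>i\<le>k. ga i * V i M))
      - ((\<Sum>i\<le>k. be i * poly (Q i) (tM M)) - (\<Sum>i\<le>k. be i * U i M))
      - ((\<Sum>i\<le>k. de i * E3 i) - (\<Sum>i\<le>k. de i * W i M))
      + fk k x y * (S (Suc (Suc k)) (-1) M - E) + (Shuf M - Stuff M)) \<longlonglongrightarrow> 0 + 0 - 0 - 0 + 0 + 0"
    by (intro tendsto_add tendsto_diff a1 a2 b1 b2 cc dd)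
  then have "(\<lambda>M. poly (L - R) (tM M)) \<longlonglongrightarrow> 0" unfolding eq by simp
  then have "L - R = 0" by (rule poly_tendsto_zero[OF tM_at_top, rotated]) simp
  then show ?thesis unfolding lhs rhs by simp
qed

lemma part3:
  assumes k1: "k \<ge> 1"
  shows "(\<Sum>i\<le>k. euler_sum [(Suc i, -1), (Suc (k - i), 1)] * (x + y) ^ i * (y ^ (k - i) + x ^ (k - i)))
    = (\<Sum>i\<le>k. euler_sum [(Suc i, -1), (Suc (k - i), -1)] * (x ^ i * y ^ (k - i) + y ^ i * x ^ (k - i)))
      + euler_sum [(Suc (Suc k), 1)] * fk k x y"
proof -
  define V where "V i M = T (Suc i) (-1) (Suc (k - i)) (-1) M" for i M
  define W where "W i M = T (Suc i) (-1) (Suc (k - i)) 1 M" for i M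
  define E2 where "E2 i = euler_sum [(Suc i, -1), (Suc (k - i), -1)]" for i
  define E3 where "E3 i = euler_sum [(Suc i, -1), (Suc (k - i), 1)]" for i
  define E where "E = euler_sum [(Suc (Suc k), 1)]"
  define c where "c i = (x + y) ^ i * (y ^ (k - i) + x ^ (k - i))" for i
  define d where "d i = x ^ i * y ^ (k - i) + y ^ i * x ^ (k - i)" for i
  have cV: "(\<lambda>M. V i M - E2 i) \<longlonglongrightarrow> 0" if "i \<le> k" for i
  proof -
    have "V i \<longlonglongrightarrow> E2 i" unfolding V_def[abs_def] E2_def by (rule T_conv_euler) (use sgm1 in auto)
    then show ?thesis by (simp add: LIM_zero)
  qed
  have cW: "(\<lambda>M. W i M - E3 i) \<longlonglongrightarrow> 0" if "i \<le> k" for i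
  proof -
    have "W i \<longlonglongrightarrow> E3 i" unfolding W_def[abs_def] E3_def by (rule T_conv_euler) (use that k1 sgm1 sg1 in auto)
    then show ?thesis by (simp add: LIM_zero)
  qed
  define L3 where "L3 = (\<Sum>i\<le>k. c i * E3 i)"
  define R3 where "R3 = (\<Sum>i\<le>k. d i * E2 i) + E * fk k x y"
  have lhs: "(\<Sum>i\<le>k. euler_sum [(Suc i, -1), (Suc (k - i), 1)] * (x + y) ^ i * (y ^ (k - i) + x ^ (k - i))) = L3"
    unfolding L3_def c_def E3_def by (intro sum.cong refl) (simp add: algebra_simps)
  have rhs: "(\<Sum>i\<le>k. euler_sum [(Suc i, -1), (Suc (k - i), -1)] * (x ^ i * y ^ (k - i) + y ^ i * x ^ (k - i)))
      + euler_sum [(Suc (Suc k), 1)] * fk k x y = R3"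
    unfolding R3_def d_def E2_def E_def by (simp add: algebra_simps)
  have a: "(\<lambda>M. (\<Sum>i\<le>k. c i * E3 i) - (\<Sum>i\<le>k. c i * W i M)) \<longlonglongrightarrow> 0"
    using lin_comb[of "{..k}" "\<lambda>i M. E3 i" "\<lambda>i M. W i M" c] cW null_neg by auto
  have b: "(\<lambda>M. (\<Sum>i\<le>k. d i * E2 i) - (\<Sum>i\<le>k. d i * V i M)) \<longlonglongrightarrow> 0"
    using lin_comb[of "{..k}" "\<lambda>i M. E2 i" "\<lambda>i M. V i M" d] cV null_neg by auto
  have "S (Suc (Suc k)) 1 \<longlonglongrightarrow> E" unfolding E_def by (rule S_conv_euler[OF sg1]) simp
  then have "(\<lambda>M. S (Suc (Suc k)) 1 M - E) \<longlonglongrightarrow> 0" by (simp add: LIM_zero)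
  then have cc: "(\<lambda>M. fk k x y * (S (Suc (Suc k)) 1 M - E)) \<longlonglongrightarrow> 0" by (rule tendsto_mult_right_zero)
  define Shuf where "Shuf M = (\<Sum>i\<le>k. (x + y) ^ i * (y ^ (k - i) * W i M + x ^ (k - i) * W i M))" for M
  define Stuff where "Stuff M = (\<Sum>i\<le>k. x ^ i * y ^ (k - i) * V i M) + (\<Sum>i\<le>k. y ^ i * x ^ (k - i) * V i M)
        + fk k x y * S (Suc (Suc k)) 1 M" for M
  have dd: "(\<lambda>M. Shuf M - Stuff M) \<longlonglongrightarrow> 0"
    using DS[OF k1 sgm1 sgm1, of x y] unfolding Shuf_def Stuff_def V_def W_def by simp
  have eqS: "Shuf M = (\<Sum>i\<le>k. c i * W i M)" for M
    unfolding Shuf_def c_def by (intro sum.cong refl) (simp add: algebra_simps)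
  have eqT: "Stuff M = (\<Sum>i\<le>k. d i * V i M) + fk k x y * S (Suc (Suc k)) 1 M" for M
    unfolding Stuff_def d_def by (simp add: sum.distrib[symmetric] algebra_simps)
  have eq: "L3 - R3 = ((\<Sum>i\<le>k. c i * E3 i) - (\<Sum>i\<le>k. c i * W i M))
      - ((\<Sum>i\<le>k. d i * E2 i) - (\<Sum>i\<le>k. d i * V i M))
      + fk k x y * (S (Suc (Suc k)) 1 M - E) + (Shuf M - Stuff M)" for M
    using eqS[of M] eqT[of M] unfolding L3_def R3_def by (simp add: algebra_simps)
  have "(\<lambda>M. ((\<Sum>i\<le>k. c i * E3 i) - (\<Sum>i\<le>k. c i * W i M))
      - ((\<Sum>i\<le>k. d i * E2 i) - (\<Sum>i\<le>k. d i * V i M))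
      + fk k x y * (S (Suc (Suc k)) 1 M - E) + (Shuf M - Stuff M)) \<longlonglongrightarrow> 0 - 0 + 0 + 0"
    by (intro tendsto_add tendsto_diff a b cc dd)
  then have "(\<lambda>M. L3 - R3) \<longlonglongrightarrow> 0" unfolding eq[symmetric] by simp
  then have "L3 - R3 = 0" by (simp add: LIMSEQ_const_iff)
  then show ?thesis unfolding lhs rhs by simp
qed

theorem proposition4p1:
  fixes w :: nat and x y :: real
  assumes "w \<ge> 3"
  shows
   "(\<Sum>a = 1..w - 1. smult ((x + y) ^ (a - 1) * (y ^ (w - a - 1) + x ^ (w - a - 1)))
        (zeta_shuffle [(a, 1), (w - a, 1)]))
    = (\<Sum>a = 1..w - 1. smult (x ^ (a - 1) * y ^ (w - a - 1) + y ^ (a - 1) * x ^ (w - a - 1))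
        (zeta_stuffle [(a, 1), (w - a, 1)]))
      + [: euler_sum [(w, 1)] * f_w w x y :]
   \<and>
   (\<Sum>a = 1..w - 1. smult ((x + y) ^ (a - 1) * y ^ (w - a - 1))
        (zeta_shuffle [(a, 1), (w - a, -1)])
      + [: (x + y) ^ (a - 1) * euler_sum [(a, -1), (w - a, -1)] * x ^ (w - a - 1) :])
    = (\<Sum>a = 1..w - 1. smult (x ^ (a - 1) * y ^ (w - a - 1))
        (zeta_stuffle [(a, 1), (w - a, -1)])
      + [: euler_sum [(a, -1), (w - a, 1)] * y ^ (a - 1) * x ^ (w - a - 1) :])
      + [: euler_sum [(w, -1)] * f_w w x y :]
   \<and>
   (\<Sum>a = 1..w - 1. euler_sum [(a, -1), (w - a, 1)]
        * (x + y) ^ (a - 1) * (y ^ (w - a - 1) + x ^ (w - a - 1)))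
    = (\<Sum>a = 1..w - 1. euler_sum [(a, -1), (w - a, -1)]
        * (x ^ (a - 1) * y ^ (w - a - 1) + y ^ (a - 1) * x ^ (w - a - 1)))
      + euler_sum [(w, 1)] * f_w w x y"
proof -
  define k where "k = w - 2"
  have w: "w = Suc (Suc k)" using assms unfolding k_def by simp
  have k1: "k \<ge> 1" using assms unfolding k_def by simp
  have w1: "w - 1 = Suc k" using w by simp
  have swp: "(\<Sum>a = 1..w - 1. G a) = (\<Sum>i\<le>k. G (Suc i))" for G :: "nat \<Rightarrow> real poly"
    unfolding w1 by (rule sum_reidx)
  have swr: "(\<Sum>a = 1..w - 1. G a) = (\<Sum>i\<le>k. G (Suc i))" for G :: "nat \<Rightarrow> real"
    unfolding w1 by (rule sum_reidx)
  have fw: "f_w w x y = fk k x y" unfolding w by (rule fw_eq)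
  have e1: "(\<Sum>a = 1..w - 1. smult ((x + y) ^ (a - 1) * (y ^ (w - a - 1) + x ^ (w - a - 1)))
        (zeta_shuffle [(a, 1), (w - a, 1)]))
     = (\<Sum>i\<le>k. smult ((x + y) ^ i * (y ^ (k - i) + x ^ (k - i))) (zeta_shuffle [(Suc i, 1), (Suc (k - i), 1)]))"
    unfolding swp by (intro sum.cong refl) (simp add: w Suc_diff_le)
  have e2: "(\<Sum>a = 1..w - 1. smult (x ^ (a - 1) * y ^ (w - a - 1) + y ^ (a - 1) * x ^ (w - a - 1))
        (zeta_stuffle [(a, 1), (w - a, 1)]))
     = (\<Sum>i\<le>k. smult (x ^ i * y ^ (k - i) + y ^ i * x ^ (k - i)) (zeta_stuffle [(Suc i, 1), (Suc (k - i), 1)]))"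
    unfolding swp by (intro sum.cong refl) (simp add: w Suc_diff_le)
  have e3: "(\<Sum>a = 1..w - 1. smult ((x + y) ^ (a - 1) * y ^ (w - a - 1))
        (zeta_shuffle [(a, 1), (w - a, -1)])
      + [: (x + y) ^ (a - 1) * euler_sum [(a, -1), (w - a, -1)] * x ^ (w - a - 1) :])
     = (\<Sum>i\<le>k. smult ((x + y) ^ i * y ^ (k - i)) (zeta_shuffle [(Suc i, 1), (Suc (k - i), -1)])
          + [: (x + y) ^ i * euler_sum [(Suc i, -1), (Suc (k - i), -1)] * x ^ (k - i) :])"
    unfolding swp by (intro sum.cong refl) (simp add: w Suc_diff_le)
  have e4: "(\<Sum>a = 1..w - 1. smult (x ^ (a - 1) * y ^ (w - a - 1))
        (zeta_stuffle [(a, 1), (w - a, -1)])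
      + [: euler_sum [(a, -1), (w - a, 1)] * y ^ (a - 1) * x ^ (w - a - 1) :])
     = (\<Sum>i\<le>k. smult (x ^ i * y ^ (k - i)) (zeta_stuffle [(Suc i, 1), (Suc (k - i), -1)])
          + [: euler_sum [(Suc i, -1), (Suc (k - i), 1)] * y ^ i * x ^ (k - i) :])"
    unfolding swp by (intro sum.cong refl) (simp add: w Suc_diff_le)
  have e5: "(\<Sum>a = 1..w - 1. euler_sum [(a, -1), (w - a, 1)]
        * (x + y) ^ (a - 1) * (y ^ (w - a - 1) + x ^ (w - a - 1)))
     = (\<Sum>i\<le>k. euler_sum [(Suc i, -1), (Suc (k - i), 1)] * (x + y) ^ i * (y ^ (k - i) + x ^ (k - i)))"
    unfolding swr by (intro sum.cong refl) (simp add: w Suc_diff_le)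
  have e6: "(\<Sum>a = 1..w - 1. euler_sum [(a, -1), (w - a, -1)]
        * (x ^ (a - 1) * y ^ (w - a - 1) + y ^ (a - 1) * x ^ (w - a - 1)))
     = (\<Sum>i\<le>k. euler_sum [(Suc i, -1), (Suc (k - i), -1)] * (x ^ i * y ^ (k - i) + y ^ i * x ^ (k - i)))"
    unfolding swr by (intro sum.cong refl) (simp add: w Suc_diff_le)
  show ?thesis
    unfolding e1 e2 e3 e4 e5 e6 fw
    using part1[OF k1, of x y] part2[OF k1, of x y] part3[OF k1, of x y] by (simp add: w)
qed

end
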